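(* Let $(M,\circ,\mathrm{OR})$ be a free $\mathbb{D}$-module of rank 3 endowed with a scalar product $\circ$ and an orientation $\mathrm{OR}$. Let $E$ be the set of real 3-dimensional subspaces $P\subset M$ such that $\mathfrak{Du}(x\circ y)=0$ for all $x,y\in P$ and $P\cap\epsilon M=\{0\}$. Then $E$, with the subtraction $B-A$ described in the context, is a 3-dimensional Euclidean affine space modelled on $(V,\cdot,\mathrm{or})$, where $V=M/\epsilon M$ carries the inner product and orientation induced from $M$. Moreover, if $\mathcal{S}$ denotes the space of screws on $E$ with its natural $\mathbb{D}$-module geometry structure, then the map $\beta:M\to\mathcal{S}$ defined by $\beta(z)(A)=\mathcal{s}(A)$, where $z=a+\epsilon\,\mathcal{s}(A)$ is the unique decomposition with $a\in A$ and $\mathcal{s}(A)\in V$, is a well-defined $\mathbb{D}$-linear isomorphism which preserves the scalar product and the orientation, and hence also the cross product ($\beta(z_1\times z_2)=[\beta(z_1),\beta(z_2)]$).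
   Context: $\mathbb{D}=\{a+\epsilon b: a,b\in\mathbb{R}\}$ is the ring of dual numbers, $\epsilon^2=0$, with $\mathfrak{Re}(a+\epsilon b)=a$, $\mathfrak{Du}(a+\epsilon b)=b$. A scalar product on a free $\mathbb{D}$-module $M$ is a symmetric $\mathbb{D}$-bilinear map $\circ:M\times M\to\mathbb{D}$ with $\mathfrak{Re}(x\circ x)\ge0$ for all $x$, with equality iff $x\in\epsilon M$. An orientation of $M$ is a choice of one of the two equivalence classes of ordered bases, where $\{b'_j=A_{jk}b_k\}\sim\{b_k\}$ iff $\det\mathfrak{Re}(A)>0$ ($A$ a dual-number matrix). $V=M/\epsilon M$, with quotient map $\pi$; $\mathfrak{Re}(\cdot\circ\cdot)$ descends to an inner product $\cdot$ on $V$, and the orientation of $M$ descends to an orientation of $V$ (bases of $M$ project to bases of $V$). Multiplication by $\epsilon$ induces a real isomorphism $V\to\epsilon M$, also denoted $\epsilon$. On $M$, the cross product is $x\times y=x^iy^j\epsilon_{ijk}m_k$ where $x=x^im_i$, $y=y^im_i$ and $\{m_i\}$ is any positive orthonormal basis ($m_i\circ m_j=\delta_{ij}$). For $P\in E$ and $v\in V$, $v^P$ is the unique element of $P$ with $\pi(v^P)=v$; since $M=P\oplus\epsilon M$, each $z\in M$ decomposes uniquely as $z=a+\epsilon v$ with $a\in P$, $v\in V$. Subtraction on $E$: for $A,B\in E$ and a positive orthonormal basis $\{e_i\}$ of $V$, one has $e^B_i=e^A_i+\epsilon\,\epsilon_{ijk}d^k e^A_j$ for a real vector $(d^k)$, and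 $B-A:=d^ke_k\in V$. Screws on a Euclidean space $E$ modelled on $(V,\cdot,\mathrm{or})$: a screw is a map $\mathcal{s}:E\to V$ for which there is $s\in V$ (the resultant) with $\mathcal{s}(Q)-\mathcal{s}(P)=s\times(Q-P)$ for all $P,Q\in E$; they form a 6-dimensional real vector space $\mathcal{S}$. Its natural $\mathbb{D}$-module geometry: $\epsilon\,\mathcal{s}$ is the constant field equal to the resultant $s$; scalar product $\mathcal{s}_1\circ\mathcal{s}_2=s_1\cdot s_2+\epsilon(s_1\cdot\mathcal{s}_2(P)+\mathcal{s}_1(P)\cdot s_2)$ (independent of $P$); orientation: for a positive orthonormal frame $(P,(e_1,e_2,e_3))$ of $E$, the basis $(\ell_1,\ell_2,\ell_3)$, $\ell_i(Q)=e_i\times(Q-P)$, is declared positive. The commutator of screws is $[\mathcal{s}_1,\mathcal{s}_2](P)=s_1\times\mathcal{s}_2(P)+\mathcal{s}_1(P)\times s_2$. *)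

theory Defs
  imports "HOL-Analysis.Analysis"
begin

(* Dual numbers a + eps b are represented as pairs (a,b) :: real * real.
   A D-module is a real vector space 'x with a real-linear map ep with ep o ep = 0
   (action of eps).  (a,b) acts as  a x + b (ep x). *)

definition levi :: "3 \<Rightarrow> 3 \<Rightarrow> 3 \<Rightarrow> real" where
  "levi i j k =
     (if (i,j,k) \<in> {(1,2,3),(2,3,1),(3,1,2)} then 1
      else if (i,j,k) \<in> {(1,3,2),(3,2,1),(2,1,3)} then -1 else 0)"

definition dmul :: "real \<times> real \<Rightarrow> real \<times> real \<Rightarrow> real \<times> real" where
  "dmul x y = (fst x * fst y, fst x * snd y + snd x * fst y)"

definition dscale :: "('m::real_vector \<Rightarrow> 'm) \<Rightarrow> real \<times> real \<Rightarrow> 'm \<Rightarrow> 'm" where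
  "dscale eps c x = fst c *\<^sub>R x + snd c *\<^sub>R eps x"

definition mcomb :: "('m::real_vector \<Rightarrow> 'm) \<Rightarrow> (3 \<Rightarrow> 'm) \<Rightarrow> (real^3) \<times> (real^3) \<Rightarrow> 'm" where
  "mcomb eps b ac = (\<Sum>i\<in>UNIV. (fst ac $ i) *\<^sub>R b i + (snd ac $ i) *\<^sub>R eps (b i))"

(* generic notions for a D-module with carrier C and D-linear-combination operator comb *)
definition dbasis_on :: "((3 \<Rightarrow> 'x) \<Rightarrow> (real^3) \<times> (real^3) \<Rightarrow> 'x) \<Rightarrow> 'x set \<Rightarrow> (3 \<Rightarrow> 'x) \<Rightarrow> bool" where
  "dbasis_on comb C b \<longleftrightarrow> (\<forall>i. b i \<in> C) \<and> (\<forall>x\<in>C. \<exists>!ac. x = comb b ac)"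

definition dcoord :: "((3 \<Rightarrow> 'x) \<Rightarrow> (real^3) \<times> (real^3) \<Rightarrow> 'x) \<Rightarrow> (3 \<Rightarrow> 'x) \<Rightarrow> 'x \<Rightarrow> (real^3) \<times> (real^3)" where
  "dcoord comb b x = (THE ac. x = comb b ac)"

(* real part of the D-matrix A with b_j = A_jk b0_k *)
definition reMat :: "((3 \<Rightarrow> 'x) \<Rightarrow> (real^3) \<times> (real^3) \<Rightarrow> 'x) \<Rightarrow> (3 \<Rightarrow> 'x) \<Rightarrow> (3 \<Rightarrow> 'x) \<Rightarrow> real^3^3" where
  "reMat comb b b0 = (\<chi> j k. fst (dcoord comb b0 (b j)) $ k)"

definition is_dorientation :: "((3 \<Rightarrow> 'x) \<Rightarrow> (real^3) \<times> (real^3) \<Rightarrow> 'x) \<Rightarrow> 'x set \<Rightarrow> (3 \<Rightarrow> 'x) set \<Rightarrow> bool" where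
  "is_dorientation comb C Ori \<longleftrightarrow>
     (\<exists>b0. dbasis_on comb C b0 \<and> Ori = {b. dbasis_on comb C b \<and> det (reMat comb b b0) > 0})"

definition rcomb :: "(3 \<Rightarrow> 'v::real_vector) \<Rightarrow> real^3 \<Rightarrow> 'v" where
  "rcomb e d = (\<Sum>i\<in>UNIV. (d $ i) *\<^sub>R e i)"

definition rbasis :: "(3 \<Rightarrow> 'v::real_vector) \<Rightarrow> bool" where
  "rbasis e \<longleftrightarrow> (\<forall>v. \<exists>!d. v = rcomb e d)"

definition rcoord :: "(3 \<Rightarrow> 'v::real_vector) \<Rightarrow> 'v \<Rightarrow> real^3" where
  "rcoord e v = (THE d. v = rcomb e d)"

definition rMat :: "(3 \<Rightarrow> 'v::real_vector) \<Rightarrow> (3 \<Rightarrow> 'v) \<Rightarrow> real^3^3" where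
  "rMat e e0 = (\<chi> j k. rcoord e0 (e j) $ k)"

definition is_rorientation :: "(3 \<Rightarrow> 'v::real_vector) set \<Rightarrow> bool" where
  "is_rorientation Ori \<longleftrightarrow> (\<exists>e0. rbasis e0 \<and> Ori = {e. rbasis e \<and> det (rMat e e0) > 0})"

(* ---- the data: eps, scalar product sp, orientation OR of M, quotient map prj : M -> V = M/eps M ---- *)

definition orV :: "('m::real_vector \<Rightarrow> 'm) \<Rightarrow> ('m \<Rightarrow> 'm \<Rightarrow> real \<times> real) \<Rightarrow> (3 \<Rightarrow> 'm) set
                   \<Rightarrow> ('m \<Rightarrow> 'v::real_vector) \<Rightarrow> (3 \<Rightarrow> 'v) set" where
  "orV eps sp OR prj = {e. rbasis e \<and> (\<exists>b\<in>OR. det (rMat e (prj \<circ> b)) > 0)}"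

definition dotV :: "('m::real_vector \<Rightarrow> 'm) \<Rightarrow> ('m \<Rightarrow> 'm \<Rightarrow> real \<times> real) \<Rightarrow> (3 \<Rightarrow> 'm) set
                   \<Rightarrow> ('m \<Rightarrow> 'v::real_vector) \<Rightarrow> 'v \<Rightarrow> 'v \<Rightarrow> real" where
  "dotV eps sp OR prj u v = fst (sp (SOME x. prj x = u) (SOME y. prj y = v))"

definition posONB_V :: "('m::real_vector \<Rightarrow> 'm) \<Rightarrow> ('m \<Rightarrow> 'm \<Rightarrow> real \<times> real) \<Rightarrow> (3 \<Rightarrow> 'm) set
                   \<Rightarrow> ('m \<Rightarrow> 'v::real_vector) \<Rightarrow> (3 \<Rightarrow> 'v) set" where
  "posONB_V eps sp OR prj =
     {e. e \<in> orV eps sp OR prj \<and> (\<forall>i j. dotV eps sp OR prj (e i) (e j) = (if i = j then 1 else 0))}"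

definition crossV :: "('m::real_vector \<Rightarrow> 'm) \<Rightarrow> ('m \<Rightarrow> 'm \<Rightarrow> real \<times> real) \<Rightarrow> (3 \<Rightarrow> 'm) set
                   \<Rightarrow> ('m \<Rightarrow> 'v::real_vector) \<Rightarrow> 'v \<Rightarrow> 'v \<Rightarrow> 'v" where
  "crossV eps sp OR prj x y = (THE w. \<forall>e\<in>posONB_V eps sp OR prj.
      w = (\<Sum>i\<in>UNIV. \<Sum>j\<in>UNIV. \<Sum>k\<in>UNIV.
             (levi i j k * rcoord e x $ i * rcoord e y $ j) *\<^sub>R e k))"

definition posONB_M :: "('m::real_vector \<Rightarrow> 'm) \<Rightarrow> ('m \<Rightarrow> 'm \<Rightarrow> real \<times> real) \<Rightarrow> (3 \<Rightarrow> 'm) set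
                   \<Rightarrow> (3 \<Rightarrow> 'm) set" where
  "posONB_M eps sp OR = {m. m \<in> OR \<and> (\<forall>i j. sp (m i) (m j) = (if i = j then 1 else 0, 0))}"

definition dcomp :: "('m::real_vector \<Rightarrow> 'm) \<Rightarrow> (3 \<Rightarrow> 'm) \<Rightarrow> 'm \<Rightarrow> 3 \<Rightarrow> real \<times> real" where
  "dcomp eps m x i = (fst (dcoord (mcomb eps) m x) $ i, snd (dcoord (mcomb eps) m x) $ i)"

definition crossM :: "('m::real_vector \<Rightarrow> 'm) \<Rightarrow> ('m \<Rightarrow> 'm \<Rightarrow> real \<times> real) \<Rightarrow> (3 \<Rightarrow> 'm) set
                   \<Rightarrow> 'm \<Rightarrow> 'm \<Rightarrow> 'm" where
  "crossM eps sp OR x y = (THE w. \<forall>m\<in>posONB_M eps sp OR.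
      w = (\<Sum>i\<in>UNIV. \<Sum>j\<in>UNIV. \<Sum>k\<in>UNIV.
             dscale eps (dmul (dcomp eps m x i) (dcomp eps m y j)) (levi i j k *\<^sub>R m k)))"

definition Espace :: "('m::real_vector \<Rightarrow> 'm) \<Rightarrow> ('m \<Rightarrow> 'm \<Rightarrow> real \<times> real) \<Rightarrow> 'm set set" where
  "Espace eps sp = {P. subspace P \<and> dim P = 3 \<and> (\<forall>x\<in>P. \<forall>y\<in>P. snd (sp x y) = 0)
                       \<and> P \<inter> range eps = {0}}"

definition lift :: "('m::real_vector \<Rightarrow> 'v) \<Rightarrow> 'm set \<Rightarrow> 'v \<Rightarrow> 'm" where
  "lift prj P v = (THE x. x \<in> P \<and> prj x = v)"

(* esub ... B A  is  B - A *)
definition esub :: "('m::real_vector \<Rightarrow> 'm) \<Rightarrow> ('m \<Rightarrow> 'm \<Rightarrow> real \<times> real) \<Rightarrow> (3 \<Rightarrow> 'm) set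
                   \<Rightarrow> ('m \<Rightarrow> 'v::real_vector) \<Rightarrow> 'm set \<Rightarrow> 'm set \<Rightarrow> 'v" where
  "esub eps sp OR prj B A = (THE v. \<forall>e\<in>posONB_V eps sp OR prj. \<exists>d. v = rcomb e d \<and>
      (\<forall>i. lift prj B (e i) = lift prj A (e i)
             + (\<Sum>j\<in>UNIV. \<Sum>k\<in>UNIV. (levi i j k * d $ k) *\<^sub>R eps (lift prj A (e j)))))"

(* screws on E: maps E -> V, normalised to 0 outside E *)
definition screws :: "('m::real_vector \<Rightarrow> 'm) \<Rightarrow> ('m \<Rightarrow> 'm \<Rightarrow> real \<times> real) \<Rightarrow> (3 \<Rightarrow> 'm) set
                   \<Rightarrow> ('m \<Rightarrow> 'v::real_vector) \<Rightarrow> ('m set \<Rightarrow> 'v) set" where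
  "screws eps sp OR prj = {s. (\<forall>A. A \<notin> Espace eps sp \<longrightarrow> s A = 0) \<and>
      (\<exists>r. \<forall>P\<in>Espace eps sp. \<forall>Q\<in>Espace eps sp.
            s Q - s P = crossV eps sp OR prj r (esub eps sp OR prj Q P))}"

definition resultant :: "('m::real_vector \<Rightarrow> 'm) \<Rightarrow> ('m \<Rightarrow> 'm \<Rightarrow> real \<times> real) \<Rightarrow> (3 \<Rightarrow> 'm) set
                   \<Rightarrow> ('m \<Rightarrow> 'v::real_vector) \<Rightarrow> ('m set \<Rightarrow> 'v) \<Rightarrow> 'v" where
  "resultant eps sp OR prj s = (THE r. \<forall>P\<in>Espace eps sp. \<forall>Q\<in>Espace eps sp.
            s Q - s P = crossV eps sp OR prj r (esub eps sp OR prj Q P))"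

definition epsS :: "('m::real_vector \<Rightarrow> 'm) \<Rightarrow> ('m \<Rightarrow> 'm \<Rightarrow> real \<times> real) \<Rightarrow> (3 \<Rightarrow> 'm) set
                   \<Rightarrow> ('m \<Rightarrow> 'v::real_vector) \<Rightarrow> ('m set \<Rightarrow> 'v) \<Rightarrow> ('m set \<Rightarrow> 'v)" where
  "epsS eps sp OR prj s = (\<lambda>A. if A \<in> Espace eps sp then resultant eps sp OR prj s else 0)"

definition scomb :: "('m::real_vector \<Rightarrow> 'm) \<Rightarrow> ('m \<Rightarrow> 'm \<Rightarrow> real \<times> real) \<Rightarrow> (3 \<Rightarrow> 'm) set
                   \<Rightarrow> ('m \<Rightarrow> 'v::real_vector) \<Rightarrow> (3 \<Rightarrow> ('m set \<Rightarrow> 'v)) \<Rightarrow> (real^3) \<times> (real^3) \<Rightarrow> ('m set \<Rightarrow> 'v)" where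
  "scomb eps sp OR prj b ac = (\<lambda>A. \<Sum>i\<in>UNIV. (fst ac $ i) *\<^sub>R b i A
                                   + (snd ac $ i) *\<^sub>R epsS eps sp OR prj (b i) A)"

definition spS :: "('m::real_vector \<Rightarrow> 'm) \<Rightarrow> ('m \<Rightarrow> 'm \<Rightarrow> real \<times> real) \<Rightarrow> (3 \<Rightarrow> 'm) set
                   \<Rightarrow> ('m \<Rightarrow> 'v::real_vector) \<Rightarrow> ('m set \<Rightarrow> 'v) \<Rightarrow> ('m set \<Rightarrow> 'v) \<Rightarrow> real \<times> real" where
  "spS eps sp OR prj s1 s2 =
     (let P = (SOME P. P \<in> Espace eps sp); r1 = resultant eps sp OR prj s1; r2 = resultant eps sp OR prj s2
      in (dotV eps sp OR prj r1 r2, dotV eps sp OR prj r1 (s2 P) + dotV eps sp OR prj (s1 P) r2))"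

definition ellS :: "('m::real_vector \<Rightarrow> 'm) \<Rightarrow> ('m \<Rightarrow> 'm \<Rightarrow> real \<times> real) \<Rightarrow> (3 \<Rightarrow> 'm) set
                   \<Rightarrow> ('m \<Rightarrow> 'v::real_vector) \<Rightarrow> 'm set \<Rightarrow> (3 \<Rightarrow> 'v) \<Rightarrow> 3 \<Rightarrow> ('m set \<Rightarrow> 'v)" where
  "ellS eps sp OR prj P e i = (\<lambda>Q. if Q \<in> Espace eps sp
                                   then crossV eps sp OR prj (e i) (esub eps sp OR prj Q P) else 0)"

definition commS :: "('m::real_vector \<Rightarrow> 'm) \<Rightarrow> ('m \<Rightarrow> 'm \<Rightarrow> real \<times> real) \<Rightarrow> (3 \<Rightarrow> 'm) set
                   \<Rightarrow> ('m \<Rightarrow> 'v::real_vector) \<Rightarrow> ('m set \<Rightarrow> 'v) \<Rightarrow> ('m set \<Rightarrow> 'v) \<Rightarrow> ('m set \<Rightarrow> 'v)" where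
  "commS eps sp OR prj s1 s2 = (\<lambda>P. if P \<in> Espace eps sp
       then crossV eps sp OR prj (resultant eps sp OR prj s1) (s2 P)
            + crossV eps sp OR prj (s1 P) (resultant eps sp OR prj s2)
       else 0)"

definition epsV :: "('m::real_vector \<Rightarrow> 'm) \<Rightarrow> ('m \<Rightarrow> 'v) \<Rightarrow> 'v \<Rightarrow> 'm" where
  "epsV eps prj v = eps (SOME x. prj x = v)"

definition beta :: "('m::real_vector \<Rightarrow> 'm) \<Rightarrow> ('m \<Rightarrow> 'm \<Rightarrow> real \<times> real) \<Rightarrow> (3 \<Rightarrow> 'm) set
                   \<Rightarrow> ('m \<Rightarrow> 'v::real_vector) \<Rightarrow> 'm \<Rightarrow> ('m set \<Rightarrow> 'v)" where
  "beta eps sp OR prj z = (\<lambda>A. if A \<in> Espace eps sp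
       then (THE v. \<exists>a\<in>A. z = a + epsV eps prj v) else 0)"

end

theory Submission
  imports Defs
begin

lemma levi_cyc: "levi i j k = levi j k i"
  by (cases i; cases j; cases k) (auto simp: levi_def)

locale dm =
  fixes eps :: "'m::real_vector \<Rightarrow> 'm" and sp :: "'m \<Rightarrow> 'm \<Rightarrow> real \<times> real"
    and OR :: "(3 \<Rightarrow> 'm) set" and prj :: "'m \<Rightarrow> 'v::real_vector"
  assumes eps_lin: "linear eps"
    and eps_sq: "\<And>x. eps (eps x) = 0"
    and free3: "\<exists>b. dbasis_on (mcomb eps) UNIV b"
    and sp_lin: "\<And>y. linear (\<lambda>x. sp x y)"
    and sp_sym: "\<And>x y. sp x y = sp y x"
    and sp_eps: "\<And>x y. sp x (eps y) = (0, fst (sp x y))"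
    and sp_pos: "\<And>x. fst (sp x x) \<ge> 0"
    and sp_def0: "\<And>x. fst (sp x x) = 0 \<longleftrightarrow> x \<in> range eps"
    and OR_or: "is_dorientation (mcomb eps) UNIV OR"
    and pi_lin: "linear prj"
    and pi_surj: "surj prj"
    and pi_ker: "\<And>x. prj x = 0 \<longleftrightarrow> x \<in> range eps"
begin

abbreviation "dot \<equiv> dotV eps sp OR prj"
abbreviation "eV \<equiv> epsV eps prj"

definition ch :: "'v \<Rightarrow> 'm" where "ch v = (SOME x. prj x = v)"

lemma prj_ch[simp]: "prj (ch v) = v"
  unfolding ch_def by (rule someI_ex) (metis pi_surj surj_def)

lemma sp_lin2: "linear (\<lambda>y. sp x y)"
  using sp_lin[of x] by (simp add: sp_sym)

lemma sp_add1: "sp (x + y) z = sp x z + sp y z" using linear_add[OF sp_lin] .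
lemma sp_add2: "sp z (x + y) = sp z x + sp z y" using linear_add[OF sp_lin2] .
lemma sp_scale1: "sp (c *\<^sub>R x) z = c *\<^sub>R sp x z" using linear_scale[OF sp_lin] .
lemma sp_scale2: "sp z (c *\<^sub>R x) = c *\<^sub>R sp z x" using linear_scale[OF sp_lin2] .
lemma sp_diff1: "sp (x - y) z = sp x z - sp y z" using linear_diff[OF sp_lin] .
lemma sp_diff2: "sp z (x - y) = sp z x - sp z y" using linear_diff[OF sp_lin2] .
lemma sp_zero1[simp]: "sp 0 z = 0" using linear_0[OF sp_lin] .
lemma sp_zero2[simp]: "sp z 0 = 0" using linear_0[OF sp_lin2] .
lemma sp_neg1: "sp (- x) z = - sp x z" using linear_neg[OF sp_lin] .
lemma sp_neg2: "sp z (- x) = - sp z x" using linear_neg[OF sp_lin2] .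
lemma sp_sum1: "sp (\<Sum>i\<in>S. f i) z = (\<Sum>i\<in>S. sp (f i) z)" using linear_sum[OF sp_lin] .
lemma sp_sum2: "sp z (\<Sum>i\<in>S. f i) = (\<Sum>i\<in>S. sp z (f i))" using linear_sum[OF sp_lin2] .

lemmas sp_simps = sp_add1 sp_add2 sp_scale1 sp_scale2 sp_diff1 sp_diff2 sp_neg1 sp_neg2

lemma eps_add: "eps (x + y) = eps x + eps y" using linear_add[OF eps_lin] .
lemma eps_scale: "eps (c *\<^sub>R x) = c *\<^sub>R eps x" using linear_scale[OF eps_lin] .
lemma eps_diff: "eps (x - y) = eps x - eps y" using linear_diff[OF eps_lin] .
lemma eps_zero[simp]: "eps 0 = 0" using linear_0[OF eps_lin] .
lemma eps_sum: "eps (\<Sum>i\<in>S. f i) = (\<Sum>i\<in>S. eps (f i))" using linear_sum[OF eps_lin] .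
lemma prj_add: "prj (x + y) = prj x + prj y" using linear_add[OF pi_lin] .
lemma prj_scale: "prj (c *\<^sub>R x) = c *\<^sub>R prj x" using linear_scale[OF pi_lin] .
lemma prj_diff: "prj (x - y) = prj x - prj y" using linear_diff[OF pi_lin] .
lemma prj_zero[simp]: "prj 0 = 0" using linear_0[OF pi_lin] .
lemma prj_sum: "prj (\<Sum>i\<in>S. f i) = (\<Sum>i\<in>S. prj (f i))" using linear_sum[OF pi_lin] .
lemma prj_eps[simp]: "prj (eps x) = 0" using pi_ker by blast

lemma fst_sp_eps[simp]: "fst (sp x (eps y)) = 0" by (simp add: sp_eps)
lemma fst_sp_eps1[simp]: "fst (sp (eps y) x) = 0" by (simp add: sp_eps sp_sym[of "eps y"])

lemma eps_eq0_iff: "eps x = 0 \<longleftrightarrow> x \<in> range eps"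
proof
  assume "eps x = 0"
  then have "sp x (eps x) = 0" by simp
  then have "fst (sp x x) = 0" by (simp add: sp_eps zero_prod_def)
  then show "x \<in> range eps" using sp_def0 by blast
next
  assume "x \<in> range eps" then show "eps x = 0" using eps_sq by auto
qed

lemma prj_eq0_iff: "prj x = 0 \<longleftrightarrow> eps x = 0"
  using pi_ker eps_eq0_iff by blast

lemma eps_eq_iff: "eps x = eps y \<longleftrightarrow> prj x = prj y"
  using prj_eq0_iff[of "x - y"] by (simp add: eps_diff prj_diff)

lemma fst_sp_prj1: assumes "prj x = prj x'" shows "fst (sp x y) = fst (sp x' y)"
proof -
  have "prj (x - x') = 0" using assms by (simp add: prj_diff)
  then obtain w where "x - x' = eps w" using pi_ker by blast
  then have "fst (sp (x - x') y) = 0" by simp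
  then show ?thesis by (simp add: sp_diff1)
qed

lemma fst_sp_prj: assumes "prj x = prj x'" "prj y = prj y'" shows "fst (sp x y) = fst (sp x' y')"
  using fst_sp_prj1[OF assms(1), of y] fst_sp_prj1[OF assms(2), of x'] by (simp add: sp_sym)

lemma dot_ch: "dot u v = fst (sp (ch u) (ch v))"
  by (simp add: dotV_def ch_def)

lemma dot_rep: assumes "prj x = u" "prj y = v" shows "dot u v = fst (sp x y)"
  unfolding dot_ch by (rule fst_sp_prj) (use assms in auto)

lemma dot_prj: "dot (prj x) (prj y) = fst (sp x y)"
  by (rule dot_rep) auto

lemma dot_sym: "dot u v = dot v u"
  by (simp add: dot_ch sp_sym)

lemma dot_add1: "dot (u + v) w = dot u w + dot v w"
  using dot_rep[of "ch u + ch v" "u + v" "ch w" w] by (simp add: prj_add sp_add1 dot_ch)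

lemma dot_add2: "dot w (u + v) = dot w u + dot w v"
  using dot_add1 dot_sym by metis

lemma dot_scale1: "dot (c *\<^sub>R u) w = c * dot u w"
  using dot_rep[of "c *\<^sub>R ch u" "c *\<^sub>R u" "ch w" w] by (simp add: prj_scale sp_scale1 dot_ch)

lemma dot_scale2: "dot w (c *\<^sub>R u) = c * dot w u"
  using dot_scale1 dot_sym by metis

lemma dot_lin2: "linear (\<lambda>v. dot u v)"
  by (rule linearI) (auto simp: dot_add2 dot_scale2)

lemma dot_lin1: "linear (\<lambda>v. dot v u)"
  by (rule linearI) (auto simp: dot_add1 dot_scale1)

lemma dot_zero1[simp]: "dot 0 u = 0" using linear_0[OF dot_lin1] .
lemma dot_zero2[simp]: "dot u 0 = 0" using linear_0[OF dot_lin2] .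
lemma dot_diff1: "dot (u - v) w = dot u w - dot v w" using linear_diff[OF dot_lin1] .
lemma dot_diff2: "dot w (u - v) = dot w u - dot w v" using linear_diff[OF dot_lin2] .
lemma dot_neg1: "dot (- u) w = - dot u w" using linear_neg[OF dot_lin1] .
lemma dot_neg2: "dot w (- u) = - dot w u" using linear_neg[OF dot_lin2] .
lemma dot_sum1: "dot (\<Sum>i\<in>S. f i) w = (\<Sum>i\<in>S. dot (f i) w)" using linear_sum[OF dot_lin1] .
lemma dot_sum2: "dot w (\<Sum>i\<in>S. f i) = (\<Sum>i\<in>S. dot w (f i))" using linear_sum[OF dot_lin2] .

lemmas dot_simps = dot_add1 dot_add2 dot_scale1 dot_scale2 dot_diff1 dot_diff2 dot_neg1 dot_neg2

lemma dot_pos: assumes "v \<noteq> 0" shows "dot v v > 0"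
proof -
  have "ch v \<notin> range eps" using assms pi_ker[of "ch v"] by simp
  then have "fst (sp (ch v) (ch v)) \<noteq> 0" using sp_def0 by blast
  then show ?thesis using sp_pos[of "ch v"] by (simp add: dot_ch)
qed

lemma dot_self_eq0: "dot v v = 0 \<longleftrightarrow> v = 0"
  using dot_pos by force

lemma dot_ge0: "dot v v \<ge> 0"
  using dot_pos by (cases "v = 0") (auto simp: less_imp_le)

lemma eV_ch: "eV v = eps (ch v)" by (simp add: epsV_def ch_def)

lemma eV_prj[simp]: "eV (prj x) = eps x"
  unfolding eV_ch by (simp add: eps_eq_iff)

lemma eV_add: "eV (u + v) = eV u + eV v"
  using eV_prj[of "ch u + ch v"] by (simp add: prj_add eps_add eV_ch)
lemma eV_scale: "eV (c *\<^sub>R u) = c *\<^sub>R eV u"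
  using eV_prj[of "c *\<^sub>R ch u"] by (simp add: prj_scale eps_scale eV_ch)
lemma eV_lin: "linear eV" by (rule linearI) (auto simp: eV_add eV_scale)
lemma eV_zero[simp]: "eV 0 = 0" using linear_0[OF eV_lin] .
lemma eV_diff: "eV (u - v) = eV u - eV v" using linear_diff[OF eV_lin] .
lemma eV_neg: "eV (- u) = - eV u" using linear_neg[OF eV_lin] .
lemma eV_sum: "eV (\<Sum>i\<in>S. f i) = (\<Sum>i\<in>S. eV (f i))" using linear_sum[OF eV_lin] .

lemma eV_eq0[simp]: "eV v = 0 \<longleftrightarrow> v = 0"
  unfolding eV_ch using eps_eq_iff[of "ch v" 0] by auto

lemma eV_inj: "eV u = eV v \<longleftrightarrow> u = v"
  using eV_eq0[of "u - v"] by (simp add: eV_diff)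

lemma prj_eV[simp]: "prj (eV v) = 0" by (simp add: eV_ch)
lemma eps_eV[simp]: "eps (eV v) = 0" by (simp add: eV_ch eps_sq)

lemma ker_prj_eV: "prj x = 0 \<longleftrightarrow> (\<exists>v. x = eV v)"
proof
  assume "prj x = 0" then obtain y where "x = eps y" using pi_ker by blast
  then show "\<exists>v. x = eV v" by (metis eV_prj)
qed auto

lemma sp_eV2: "sp x (eV v) = (0, dot (prj x) v)"
  by (simp add: eV_ch sp_eps dot_prj[of x "ch v", simplified])

lemma sp_eV1: "sp (eV v) x = (0, dot v (prj x))"
  using sp_eV2 sp_sym dot_sym by metis

lemma sp_eV_eV[simp]: "sp (eV u) (eV v) = 0"
  by (simp add: sp_eV2 zero_prod_def)

end

lemma rcomb_add: "rcomb e (a + b) = rcomb e a + rcomb e b"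
  by (simp add: rcomb_def scaleR_add_left sum.distrib)
lemma rcomb_scale: "rcomb e (c *\<^sub>R a) = c *\<^sub>R rcomb e a"
  by (simp add: rcomb_def scaleR_sum_right)
lemma rcomb_lin: "linear (rcomb e)" by (rule linearI) (auto simp: rcomb_add rcomb_scale)
lemma rcomb_zero[simp]: "rcomb e 0 = 0" using linear_0[OF rcomb_lin] .
lemma rcomb_diff: "rcomb e (a - b) = rcomb e a - rcomb e b" using linear_diff[OF rcomb_lin] .
lemma rcomb_neg: "rcomb e (- a) = - rcomb e a" using linear_neg[OF rcomb_lin] .
lemma rcomb_sum: "rcomb e (\<Sum>i\<in>S. f i) = (\<Sum>i\<in>S. rcomb e (f i))" using linear_sum[OF rcomb_lin] .
lemma rcomb_axis[simp]: "rcomb e (axis i 1) = e i"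
proof -
  have "rcomb e (axis i 1) = (\<Sum>j\<in>UNIV. if j = i then e j else 0)"
    unfolding rcomb_def by (rule sum.cong) (auto simp: axis_def)
  then show ?thesis by simp
qed

lemma rcomb_rcoord: "rbasis e \<Longrightarrow> rcomb e (rcoord e v) = v"
  unfolding rbasis_def rcoord_def by (metis (mono_tags, lifting) theI')
lemma rcoord_rcomb: "rbasis e \<Longrightarrow> rcoord e (rcomb e d) = d"
  unfolding rbasis_def rcoord_def by (metis (mono_tags, lifting) the_equality)
lemma rcoord_eqI: "rbasis e \<Longrightarrow> v = rcomb e d \<Longrightarrow> rcoord e v = d"
  using rcoord_rcomb by blast
lemma rcomb_inj: "rbasis e \<Longrightarrow> rcomb e a = rcomb e b \<longleftrightarrow> a = b"
  by (metis rcoord_rcomb)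
lemma rcoord_basis[simp]: "rbasis e \<Longrightarrow> rcoord e (e i) = axis i 1"
  by (metis rcomb_axis rcoord_rcomb)
lemma rcoord_add: "rbasis e \<Longrightarrow> rcoord e (u + v) = rcoord e u + rcoord e v"
  by (metis rcomb_add rcomb_rcoord rcoord_rcomb)
lemma rcoord_scale: "rbasis e \<Longrightarrow> rcoord e (c *\<^sub>R u) = c *\<^sub>R rcoord e u"
  by (metis rcomb_scale rcomb_rcoord rcoord_rcomb)
lemma rcoord_lin: "rbasis e \<Longrightarrow> linear (rcoord e)"
  by (rule linearI) (auto simp: rcoord_add rcoord_scale)

lemma rMat_row: "rMat e e' $ j = rcoord e' (e j)"
  by (simp add: rMat_def vec_eq_iff)

lemma rMat_mult:
  assumes e1: "rbasis e'" and e2: "rbasis e''"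
  shows "rMat e e'' = rMat e e' ** rMat e' e''"
proof -
  have "rcoord e'' (e j) = (\<Sum>k\<in>UNIV. (rMat e e' $ j $ k) *\<^sub>R rMat e' e'' $ k)" for j
  proof -
    have "e j = rcomb e' (rcoord e' (e j))" using rcomb_rcoord[OF e1] by simp
    also have "\<dots> = (\<Sum>k\<in>UNIV. (rcoord e' (e j) $ k) *\<^sub>R e' k)" by (simp add: rcomb_def)
    finally have "rcoord e'' (e j) = rcoord e'' (\<Sum>k\<in>UNIV. (rcoord e' (e j) $ k) *\<^sub>R e' k)" by simp
    also have "\<dots> = (\<Sum>k\<in>UNIV. (rcoord e' (e j) $ k) *\<^sub>R rcoord e'' (e' k))"
      by (simp add: linear_sum[OF rcoord_lin[OF e2]] linear_scale[OF rcoord_lin[OF e2]])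
    finally show ?thesis by (simp add: rMat_row)
  qed
  then show ?thesis
    by (simp add: vec_eq_iff matrix_matrix_mult_def rMat_def sum_component)
qed

lemma rMat_self: "rbasis e \<Longrightarrow> rMat e e = mat 1"
  by (simp add: rMat_def mat_def vec_eq_iff axis_def)

lemma rMat_det_nz: assumes "rbasis e" "rbasis e'" shows "det (rMat e e') \<noteq> 0"
proof -
  have "rMat e e' ** rMat e' e = mat 1" using rMat_mult[OF assms(2,1), of e] rMat_self[OF assms(1)] by simp
  then have "det (rMat e e') * det (rMat e' e) = 1" by (metis det_I det_mul)
  then show ?thesis by auto
qed

context dm begin

lemma mcomb_eps: "eps (mcomb eps b (a, c)) = mcomb eps b (0, a)"
  by (simp add: mcomb_def eps_sum eps_add eps_scale eps_sq)

lemma prj_mcomb: "prj (mcomb eps b (a, c)) = rcomb (prj \<circ> b) a"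
  by (simp add: mcomb_def rcomb_def prj_sum prj_add prj_scale)

lemma mcomb_diff: "mcomb eps b (a - a', c - c') = mcomb eps b (a, c) - mcomb eps b (a', c')"
  by (simp add: mcomb_def algebra_simps sum_subtractf)

lemma dcoord_mcomb: "dbasis_on (mcomb eps) UNIV b \<Longrightarrow> x = mcomb eps b (dcoord (mcomb eps) b x)"
  unfolding dbasis_on_def dcoord_def by (metis (mono_tags, lifting) UNIV_I theI')

lemma dcoord_eqI: "dbasis_on (mcomb eps) UNIV b \<Longrightarrow> x = mcomb eps b ac \<Longrightarrow> dcoord (mcomb eps) b x = ac"
  unfolding dbasis_on_def dcoord_def by (metis (mono_tags, lifting) UNIV_I the_equality)

lemma mcomb_inj: "dbasis_on (mcomb eps) UNIV b \<Longrightarrow> mcomb eps b ac = mcomb eps b ac' \<Longrightarrow> ac = ac'"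
  by (metis dcoord_eqI)

lemma dbasis_prj: assumes b: "dbasis_on (mcomb eps) UNIV b" shows "rbasis (prj \<circ> b)"
  unfolding rbasis_def
proof
  fix v
  obtain ac where ac: "ch v = mcomb eps b ac" using dcoord_mcomb[OF b] by blast
  have ex: "v = rcomb (prj \<circ> b) (fst ac)"
    using arg_cong[OF ac, of prj] prj_mcomb[of b "fst ac" "snd ac"] by simp
  show "\<exists>!d. v = rcomb (prj \<circ> b) d"
  proof (rule ex1I[of _ "fst ac"])
    show "v = rcomb (prj \<circ> b) (fst ac)" by (rule ex)
    fix d assume d: "v = rcomb (prj \<circ> b) d"
    have "prj (mcomb eps b (d - fst ac, 0)) = 0"
      using d ex by (simp add: prj_mcomb rcomb_diff)
    then obtain y where y: "mcomb eps b (d - fst ac, 0) = eps y" using pi_ker by blast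
    obtain ac' where "y = mcomb eps b ac'" using dcoord_mcomb[OF b] by blast
    then have "eps y = mcomb eps b (0, fst ac')" using mcomb_eps[of b "fst ac'" "snd ac'"] by simp
    then have "(d - fst ac, 0) = (0, fst ac')" using y mcomb_inj[OF b] by metis
    then show "d = fst ac" by simp
  qed
qed

lemma fst_dcoord: assumes b: "dbasis_on (mcomb eps) UNIV b"
  shows "fst (dcoord (mcomb eps) b x) = rcoord (prj \<circ> b) (prj x)"
proof -
  have "x = mcomb eps b (dcoord (mcomb eps) b x)" by (rule dcoord_mcomb[OF b])
  then have "prj x = rcomb (prj \<circ> b) (fst (dcoord (mcomb eps) b x))"
    by (metis prj_mcomb prod.collapse)
  then show ?thesis using rcoord_eqI[OF dbasis_prj[OF b]] by simp
qed

lemma reMat_rMat: assumes "dbasis_on (mcomb eps) UNIV b'"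
  shows "reMat (mcomb eps) b b' = rMat (prj \<circ> b) (prj \<circ> b')"
  by (simp add: reMat_def rMat_def fst_dcoord[OF assms])

definition b0 :: "3 \<Rightarrow> 'm" where
  "b0 = (SOME b0. dbasis_on (mcomb eps) UNIV b0 \<and> OR = {b. dbasis_on (mcomb eps) UNIV b \<and> det (reMat (mcomb eps) b b0) > 0})"

lemma b0: "dbasis_on (mcomb eps) UNIV b0"
  "OR = {b. dbasis_on (mcomb eps) UNIV b \<and> det (reMat (mcomb eps) b b0) > 0}"
  using someI_ex[OF OR_or[unfolded is_dorientation_def]] unfolding b0_def by blast+

definition f0 :: "3 \<Rightarrow> 'v" where "f0 = prj \<circ> b0"

lemma f0: "rbasis f0" unfolding f0_def by (rule dbasis_prj[OF b0(1)])

lemma OR_iff: "b \<in> OR \<longleftrightarrow> dbasis_on (mcomb eps) UNIV b \<and> det (rMat (prj \<circ> b) f0) > 0"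
  using b0 reMat_rMat[OF b0(1)] f0_def by auto

lemma b0_OR: "b0 \<in> OR"
  using OR_iff b0(1) rMat_self[OF f0] f0_def by simp

lemma orV_iff: "e \<in> orV eps sp OR prj \<longleftrightarrow> rbasis e \<and> det (rMat e f0) > 0"
proof
  assume "e \<in> orV eps sp OR prj"
  then obtain b where e: "rbasis e" and b: "b \<in> OR" and d: "det (rMat e (prj \<circ> b)) > 0"
    unfolding orV_def by auto
  have bb: "rbasis (prj \<circ> b)" using b OR_iff dbasis_prj by blast
  have "rMat e f0 = rMat e (prj \<circ> b) ** rMat (prj \<circ> b) f0" using rMat_mult[OF bb f0] .
  then have "det (rMat e f0) = det (rMat e (prj \<circ> b)) * det (rMat (prj \<circ> b) f0)" by (simp add: det_mul)
  then show "rbasis e \<and> det (rMat e f0) > 0" using e d b OR_iff by simp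
next
  assume "rbasis e \<and> det (rMat e f0) > 0"
  then show "e \<in> orV eps sp OR prj" unfolding orV_def using b0_OR f0_def by auto
qed

lemma is_rorientation_orV: "is_rorientation (orV eps sp OR prj)"
  unfolding is_rorientation_def using f0 orV_iff by blast

end

context dm begin

definition orthon :: "(3 \<Rightarrow> 'v) \<Rightarrow> bool" where
  "orthon e \<longleftrightarrow> (\<forall>i j. dot (e i) (e j) = (if i = j then 1 else 0))"

lemma posONB_iff: "e \<in> posONB_V eps sp OR prj \<longleftrightarrow> rbasis e \<and> det (rMat e f0) > 0 \<and> orthon e"
  unfolding posONB_V_def orthon_def using orV_iff by auto

lemma dot_rcomb2: "dot w (rcomb e c) = (\<Sum>j\<in>UNIV. c $ j * dot w (e j))"
  by (simp add: rcomb_def dot_sum2 dot_scale2)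

lemma dot_rcomb1: "dot (rcomb e c) w = (\<Sum>j\<in>UNIV. c $ j * dot (e j) w)"
  by (simp add: rcomb_def dot_sum1 dot_scale1)

lemma dot_rcomb_basis: assumes on: "orthon e" shows "dot (rcomb e d) (e i) = d $ i"
proof -
  have "(\<Sum>j\<in>UNIV. d $ j * dot (e j) (e i)) = (\<Sum>j\<in>UNIV. if j = i then d $ j else 0)"
    by (rule sum.cong) (use on in \<open>auto simp: orthon_def\<close>)
  then show ?thesis by (simp add: dot_rcomb1)
qed

lemma dot_rcomb_rcomb: "orthon e \<Longrightarrow> dot (rcomb e a) (rcomb e b) = inner a b"
  by (simp add: dot_rcomb2 dot_rcomb_basis inner_vec_def mult.commute)

lemma orth_rbasis:
  assumes on: "orthon e" and spn: "\<And>k. \<exists>c. f0 k = rcomb e c"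
  shows "rbasis e"
  unfolding rbasis_def
proof
  fix v
  define d where "d = (\<chi> i. dot v (e i))"
  define w where "w = v - rcomb e d"
  have w0: "dot w (e i) = 0" for i
    by (simp add: w_def dot_diff1 dot_rcomb_basis[OF on] d_def)
  have w1: "dot w (f0 k) = 0" for k
  proof -
    obtain c where "f0 k = rcomb e c" using spn by blast
    then show ?thesis by (simp add: dot_rcomb2 w0)
  qed
  have "dot w w = dot w (rcomb f0 (rcoord f0 w))" using rcomb_rcoord[OF f0] by simp
  also have "\<dots> = 0" by (simp add: dot_rcomb2 w1)
  finally have "w = 0" using dot_self_eq0 by blast
  then have ex: "v = rcomb e d" by (simp add: w_def)
  show "\<exists>!d. v = rcomb e d"
  proof (rule ex1I[of _ d])
    show "v = rcomb e d" by (rule ex)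
    fix d' assume "v = rcomb e d'"
    then show "d' = d" by (simp add: d_def vec_eq_iff dot_rcomb_basis[OF on])
  qed
qed

lemma rcomb_eq0: "rbasis e \<Longrightarrow> rcomb e p = 0 \<Longrightarrow> p = 0"
  using rcomb_inj[of e p 0] by simp

lemma ax_neq: "(1::3) \<noteq> 2" "(1::3) \<noteq> 3" "(2::3) \<noteq> 3" "(2::3) \<noteq> 1" "(3::3) \<noteq> 1" "(3::3) \<noteq> 2"
  by simp_all

lemma posONB_ex: "\<exists>e. e \<in> posONB_V eps sp OR prj"
proof -
  define n where "n v = sqrt (dot v v)" for v
  define u where "u v = (1 / n v) *\<^sub>R v" for v
  have npos: "v \<noteq> 0 \<Longrightarrow> n v > 0" for v using dot_pos n_def by simp
  have un: "v \<noteq> 0 \<Longrightarrow> dot (u v) (u v) = 1" for v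
    using dot_pos[of v] by (simp add: u_def n_def dot_scale1 dot_scale2)
  have uz: "v \<noteq> 0 \<Longrightarrow> v = n v *\<^sub>R u v" for v using npos[of v] by (simp add: u_def)
  have fnz: "f0 k \<noteq> 0" for k
  proof
    assume "f0 k = 0"
    then have "axis k (1::real) = 0" using rcomb_eq0[OF f0, of "axis k 1"] by simp
    then show False by (simp add: axis_eq_0_iff)
  qed
  define q1 where "q1 = (1 / n (f0 1)) *\<^sub>R axis (1::3) (1::real)"
  define e1 where "e1 = u (f0 1)"
  have e1q: "e1 = rcomb f0 q1" by (simp add: e1_def u_def q1_def rcomb_scale)
  have d11: "dot e1 e1 = 1" using un fnz e1_def by simp
  define c2 where "c2 = dot (f0 2) e1"
  define p2 where "p2 = axis (2::3) (1::real) - c2 *\<^sub>R q1"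
  define g2 where "g2 = f0 2 - c2 *\<^sub>R e1"
  have g2p: "g2 = rcomb f0 p2" by (simp add: g2_def p2_def rcomb_diff rcomb_scale e1q)
  have p2c: "p2 $ 2 = 1" "p2 $ 3 = 0" by (simp_all add: p2_def q1_def axis_def)
  have g2nz: "g2 \<noteq> 0" using rcomb_eq0[OF f0, of p2] g2p p2c by auto
  define e2 where "e2 = u g2"
  define q2 where "q2 = (1 / n g2) *\<^sub>R p2"
  have e2q: "e2 = rcomb f0 q2" by (simp add: e2_def u_def q2_def rcomb_scale g2p)
  have d22: "dot e2 e2 = 1" using un g2nz e2_def by simp
  have d12: "dot e1 e2 = 0"
    by (simp add: e2_def u_def g2_def dot_simps d11 c2_def dot_sym)
  define a3 where "a3 = dot (f0 3) e1"
  define b3 where "b3 = dot (f0 3) e2"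
  define p3 where "p3 = axis (3::3) (1::real) - a3 *\<^sub>R q1 - b3 *\<^sub>R q2"
  define g3 where "g3 = f0 3 - a3 *\<^sub>R e1 - b3 *\<^sub>R e2"
  have g3p: "g3 = rcomb f0 p3" by (simp add: g3_def p3_def rcomb_diff rcomb_scale e1q e2q)
  have p3c: "p3 $ 3 = 1" by (simp add: p3_def q1_def q2_def p2c axis_def)
  have g3nz: "g3 \<noteq> 0" using rcomb_eq0[OF f0, of p3] g3p p3c by auto
  define e3 where "e3 = u g3"
  have d33: "dot e3 e3 = 1" using un g3nz e3_def by simp
  have d13: "dot e1 e3 = 0"
    by (simp add: e3_def u_def g3_def dot_simps d11 d12 a3_def b3_def dot_sym)
  have d23: "dot e2 e3 = 0"
    using dot_sym[of e2 "f0 3"] dot_sym[of e2 e1] by (simp add: e3_def u_def g3_def dot_simps d22 d12 a3_def b3_def)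
  define e where "e i = (if i = 1 then e1 else if i = 2 then e2 else e3)" for i :: 3
  have e123: "e 1 = e1" "e 2 = e2" "e 3 = e3" by (simp_all add: e_def)
  have on: "orthon e"
    unfolding orthon_def forall_3 e123
    using d11 d22 d33 d12 d13 d23 dot_sym by (auto simp: ax_neq)
  have re: "rcomb e c = c$1 *\<^sub>R e1 + c$2 *\<^sub>R e2 + c$3 *\<^sub>R e3" for c
    by (simp add: rcomb_def sum_3 e123)
  have spn: "\<exists>c. f0 k = rcomb e c" for k
  proof -
    have "f0 1 = rcomb e (vector [n (f0 1), 0, 0])"
      using uz[OF fnz[of 1]] by (simp add: re e1_def)
    moreover have "f0 2 = rcomb e (vector [c2, n g2, 0])"
      using uz[OF g2nz] by (simp add: re e2_def g2_def)
    moreover have "f0 3 = rcomb e (vector [a3, b3, n g3])"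
      using uz[OF g3nz] by (simp add: re e3_def g3_def algebra_simps)
    ultimately show ?thesis using exhaust_3[of k] by metis
  qed
  have rb: "rbasis e" by (rule orth_rbasis[OF on spn])
  have dnz: "det (rMat e f0) \<noteq> 0" by (rule rMat_det_nz[OF rb f0])
  show ?thesis
  proof (cases "det (rMat e f0) > 0")
    case True then show ?thesis using posONB_iff rb on by blast
  next
    case False
    define e' where "e' i = (if i = 3 then - e3 else e i)" for i :: 3
    have e'123: "e' 1 = e1" "e' 2 = e2" "e' 3 = - e3" by (simp_all add: e'_def e123)
    have on': "orthon e'"
      unfolding orthon_def forall_3 e'123
      using d11 d22 d33 d12 d13 d23 dot_sym by (auto simp: ax_neq dot_neg1 dot_neg2)
    have re': "rcomb e' c = c$1 *\<^sub>R e1 + c$2 *\<^sub>R e2 - c$3 *\<^sub>R e3" for c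
      by (simp add: rcomb_def sum_3 e'123)
    have spn': "\<exists>c. f0 k = rcomb e' c" for k
    proof -
      obtain c where c: "f0 k = rcomb e c" using spn by blast
      have "rcomb e c = rcomb e' (vector [c$1, c$2, - c$3])" by (simp add: re re')
      then show ?thesis using c by metis
    qed
    have rb': "rbasis e'" by (rule orth_rbasis[OF on' spn'])
    have "det (rMat e' f0) = - det (rMat e f0)"
      using rcoord_lin[OF f0]
      by (simp add: det_3 rMat_def e'123 e123 linear_neg algebra_simps)
    then have "det (rMat e' f0) > 0" using False dnz by simp
    then show ?thesis using posONB_iff rb' on' by blast
  qed
qed

definition e0 :: "3 \<Rightarrow> 'v" where "e0 = (SOME e. e \<in> posONB_V eps sp OR prj)"

lemma e0_pos: "e0 \<in> posONB_V eps sp OR prj"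
  unfolding e0_def using posONB_ex someI_ex by metis

lemma e0: "rbasis e0" "orthon e0" "det (rMat e0 f0) > 0"
  using e0_pos posONB_iff by auto

end

unbundle cross3_syntax


lemma levi_tab[simp]:
  "levi 1 1 1 = 0" "levi 1 1 2 = 0" "levi 1 1 3 = 0"
  "levi 1 2 1 = 0" "levi 1 2 2 = 0" "levi 1 2 3 = 1"
  "levi 1 3 1 = 0" "levi 1 3 2 = -1" "levi 1 3 3 = 0"
  "levi 2 1 1 = 0" "levi 2 1 2 = 0" "levi 2 1 3 = -1"
  "levi 2 2 1 = 0" "levi 2 2 2 = 0" "levi 2 2 3 = 0"
  "levi 2 3 1 = 1" "levi 2 3 2 = 0" "levi 2 3 3 = 0"
  "levi 3 1 1 = 0" "levi 3 1 2 = 1" "levi 3 1 3 = 0"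
  "levi 3 2 1 = -1" "levi 3 2 2 = 0" "levi 3 2 3 = 0"
  "levi 3 3 1 = 0" "levi 3 3 2 = 0" "levi 3 3 3 = 0"
  by (simp_all add: levi_def)

lemma cross_levi: "(x \<times> y) $ k = (\<Sum>i\<in>UNIV. \<Sum>j\<in>UNIV. levi i j k * x$i * y$j)"
  using exhaust_3[of k] by (auto simp: sum_3 cross3_def)

lemma cross_axis_levi: "(x \<times> axis i 1) $ j = (\<Sum>k\<in>UNIV. levi i j k * x$k)"
  using exhaust_3[of i] exhaust_3[of j] by (auto simp: sum_3 cross3_def axis_def)

lemma levi_sum_rcomb:
  "(\<Sum>i\<in>UNIV. \<Sum>j\<in>UNIV. \<Sum>k\<in>UNIV. (levi i j k * x$i * y$j) *\<^sub>R e k) = rcomb e (x \<times> y)"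
  by (simp add: sum_3 rcomb_def cross3_def algebra_simps)

lemma antisym_cross3:
  fixes L :: "real^3 \<Rightarrow> real^3"
  assumes L: "linear L" and as: "\<And>x y. inner (L x) y = - inner x (L y)"
  shows "\<exists>d. \<forall>x. L x = d \<times> x"
proof -
  define M where "M = (\<chi> i j. L (axis j 1) $ i)"
  have Mx: "L x = M *v x" for x
  proof -
    have "x = (\<Sum>j\<in>UNIV. x$j *\<^sub>R axis j 1)" using basis_expansion[of x] by (simp add: scalar_mult_eq_scaleR)
    then have "L x = (\<Sum>j\<in>UNIV. x$j *\<^sub>R L (axis j 1))"
      by (metis (no_types, lifting) L linear_scale linear_sum sum.cong)
    then show ?thesis by (simp add: vec_eq_iff matrix_vector_mult_def M_def sum_component mult.commute)
  qed
  have ent: "M $ i $ j = inner (L (axis j 1)) (axis i 1)" for i j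
    by (simp add: M_def inner_axis)
  have skew: "M $ i $ j = - M $ j $ i" for i j
    using as[of "axis j 1" "axis i 1"] by (simp add: ent inner_commute)
  have diag: "M $ i $ i = 0" for i using skew[of i i] by simp
  define d :: "real^3" where "d = vector [M$3$2, M$1$3, M$2$1]"
  have "L x = d \<times> x" for x
    unfolding Mx d_def
    using skew[of 1 2] skew[of 1 3] skew[of 2 3] diag[of 1] diag[of 2] diag[of 3]
    by (simp add: vec_eq_iff forall_3 cross3_def matrix_vector_mult_def sum_3 algebra_simps)
  then show ?thesis by blast
qed

lemma cross3_cancel: fixes a b :: "real^3" assumes "\<And>x. a \<times> x = b \<times> x" shows "a = b"
proof -
  have "(a - b) \<times> axis 1 1 = 0" "(a - b) \<times> axis 2 1 = 0"
    using assms by (simp_all add: Cross3.left_diff_distrib)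
  then show ?thesis by (simp add: cross3_def vec_eq_iff forall_3 axis_def)
qed

lemma rcoord_change:
  assumes "rbasis e" "rbasis e'"
  shows "rcoord e' v = transpose (rMat e e') *v rcoord e v"
proof -
  have "rcoord e' v = rcoord e' (\<Sum>j\<in>UNIV. (rcoord e v $ j) *\<^sub>R e j)"
    using rcomb_rcoord[OF assms(1), of v] by (simp add: rcomb_def)
  also have "\<dots> = (\<Sum>j\<in>UNIV. (rcoord e v $ j) *\<^sub>R rMat e e' $ j)"
    by (simp add: linear_sum[OF rcoord_lin[OF assms(2)]] linear_scale[OF rcoord_lin[OF assms(2)]] rMat_row)
  finally show ?thesis
    by (simp add: vec_eq_iff matrix_vector_mult_def transpose_def sum_component mult.commute)
qed

context dm begin

abbreviation "cr \<equiv> crossV eps sp OR prj"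

definition C :: "'v \<Rightarrow> real^3" where "C v = rcoord e0 v"

lemma C_lin: "linear C" unfolding C_def using rcoord_lin[OF e0(1)] by simp
lemma C_rcomb[simp]: "C (rcomb e0 c) = c" by (simp add: C_def rcoord_rcomb[OF e0(1)])
lemma rcomb_C[simp]: "rcomb e0 (C v) = v" by (simp add: C_def rcomb_rcoord[OF e0(1)])
lemma C_inj: "C u = C v \<longleftrightarrow> u = v" by (metis rcomb_C)
lemma C_add: "C (u + v) = C u + C v" using linear_add[OF C_lin] .
lemma C_scale: "C (c *\<^sub>R u) = c *\<^sub>R C u" using linear_scale[OF C_lin] .
lemma C_diff: "C (u - v) = C u - C v" using linear_diff[OF C_lin] .
lemma C_neg: "C (- u) = - C u" using linear_neg[OF C_lin] .
lemma C_zero[simp]: "C 0 = 0" using linear_0[OF C_lin] .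

lemma dot_coord: "orthon e \<Longrightarrow> rbasis e \<Longrightarrow> dot u v = inner (rcoord e u) (rcoord e v)"
  using dot_rcomb_rcomb rcomb_rcoord by metis

lemma dot_C: "dot u v = inner (C u) (C v)"
  using dot_coord[OF e0(2,1)] C_def by simp

lemma rcoord_onb: "orthon e \<Longrightarrow> rbasis e \<Longrightarrow> rcoord e v $ i = dot v (e i)"
  using dot_rcomb_basis rcomb_rcoord by metis

lemma key_cross:
  assumes e: "e \<in> posONB_V eps sp OR prj"
  shows "rcomb e (rcoord e x \<times> rcoord e y) = rcomb e0 (C x \<times> C y)"
proof -
  have rb: "rbasis e" and on: "orthon e" and de: "det (rMat e f0) > 0" using e posONB_iff by auto
  define R where "R = rMat e0 e"
  have chg: "rcoord e v = transpose R *v C v" for v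
    using rcoord_change[OF e0(1) rb] R_def C_def by simp
  have Rent: "R $ j $ k = dot (e0 j) (e k)" for j k
    by (simp add: R_def rMat_def rcoord_onb[OF on rb])
  have o1: "R ** transpose R = mat 1"
  proof -
    have "(R ** transpose R) $ j $ l = dot (e0 j) (e0 l)" for j l
    proof -
      have "(R ** transpose R) $ j $ l = inner (rcoord e (e0 j)) (rcoord e (e0 l))"
        by (simp add: matrix_matrix_mult_def transpose_def inner_vec_def R_def rMat_def)
      then show ?thesis using dot_coord[OF on rb] by simp
    qed
    then show ?thesis using e0(2) by (simp add: vec_eq_iff mat_def orthon_def)
  qed
  have o2: "transpose R ** R = mat 1"
  proof -
    have "(transpose R ** R) $ j $ l = dot (e j) (e l)" for j l
    proof -
      have "(transpose R ** R) $ j $ l = (\<Sum>k\<in>UNIV. dot (e j) (e0 k) * dot (e l) (e0 k))"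
        by (simp add: matrix_matrix_mult_def transpose_def Rent dot_sym)
      also have "\<dots> = inner (rcoord e0 (e j)) (rcoord e0 (e l))"
        by (simp add: inner_vec_def rcoord_onb[OF e0(2,1)])
      finally show ?thesis using dot_coord[OF e0(2,1)] by simp
    qed
    then show ?thesis using on by (simp add: vec_eq_iff mat_def orthon_def)
  qed
  have orth: "orthogonal_matrix (transpose R)"
    using o1 o2 by (simp add: orthogonal_matrix_def)
  have "rMat e0 f0 = R ** rMat e f0" using rMat_mult[OF rb f0, of e0] R_def by simp
  then have "det (rMat e0 f0) = det R * det (rMat e f0)" by (simp add: det_mul)
  then have "det R * det (rMat e f0) > 0" using e0(3) by simp
  then have "det R > 0" using de by (simp add: zero_less_mult_iff)
  moreover have "det (transpose R) = 1 \<or> det (transpose R) = - 1" by (rule det_orthogonal_matrix[OF orth])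
  ultimately have "det (transpose R) = 1" by (simp add: det_transpose)
  then have "rcoord e x \<times> rcoord e y = transpose R *v (C x \<times> C y)"
    using cross_orthogonal_matrix[OF orth, of "C x" "C y"] chg by simp
  also have "\<dots> = rcoord e (rcomb e0 (C x \<times> C y))" using chg by simp
  finally show ?thesis using rcomb_rcoord[OF rb] by simp
qed

lemma cr_eq: "cr x y = rcomb e0 (C x \<times> C y)"
  unfolding crossV_def
proof (rule the_equality)
  show "\<forall>e\<in>posONB_V eps sp OR prj. rcomb e0 (C x \<times> C y) =
      (\<Sum>i\<in>UNIV. \<Sum>j\<in>UNIV. \<Sum>k\<in>UNIV. (levi i j k * rcoord e x $ i * rcoord e y $ j) *\<^sub>R e k)"
    by (auto simp: levi_sum_rcomb key_cross)
next
  fix w assume "\<forall>e\<in>posONB_V eps sp OR prj. w =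
      (\<Sum>i\<in>UNIV. \<Sum>j\<in>UNIV. \<Sum>k\<in>UNIV. (levi i j k * rcoord e x $ i * rcoord e y $ j) *\<^sub>R e k)"
  then show "w = rcomb e0 (C x \<times> C y)" using e0_pos by (auto simp: levi_sum_rcomb key_cross)
qed

lemma cr_formula: "e \<in> posONB_V eps sp OR prj \<Longrightarrow> cr x y =
      (\<Sum>i\<in>UNIV. \<Sum>j\<in>UNIV. \<Sum>k\<in>UNIV. (levi i j k * rcoord e x $ i * rcoord e y $ j) *\<^sub>R e k)"
  by (simp add: levi_sum_rcomb key_cross cr_eq)

lemma C_cr: "C (cr x y) = C x \<times> C y" by (simp add: cr_eq)

lemma cr_add1: "cr (x + y) z = cr x z + cr y z"
  by (simp add: C_inj[symmetric] C_cr C_add cross_add_left)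
lemma cr_add2: "cr z (x + y) = cr z x + cr z y"
  by (simp add: C_inj[symmetric] C_cr C_add cross_add_right)
lemma cr_scale1: "cr (c *\<^sub>R x) z = c *\<^sub>R cr x z"
  by (simp add: C_inj[symmetric] C_cr C_scale cross_mult_left)
lemma cr_scale2: "cr z (c *\<^sub>R x) = c *\<^sub>R cr z x"
  by (simp add: C_inj[symmetric] C_cr C_scale cross_mult_right)
lemma cr_diff1: "cr (x - y) z = cr x z - cr y z"
  by (simp add: C_inj[symmetric] C_cr C_diff Cross3.left_diff_distrib)
lemma cr_diff2: "cr z (x - y) = cr z x - cr z y"
  by (simp add: C_inj[symmetric] C_cr C_diff Cross3.right_diff_distrib)
lemma cr_anti: "cr x y = - cr y x"
  by (simp add: C_inj[symmetric] C_cr C_neg cross_skew[of "C x"])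
lemma cr_zero1[simp]: "cr 0 x = 0" by (simp add: C_inj[symmetric] C_cr)
lemma cr_zero2[simp]: "cr x 0 = 0" by (simp add: C_inj[symmetric] C_cr)
lemma cr_lin2: "linear (cr d)" by (rule linearI) (simp_all add: cr_add2 cr_scale2)
lemma cr_lin1: "linear (\<lambda>x. cr x d)" by (rule linearI) (simp_all add: cr_add1 cr_scale1)

lemma cr_jacobi: "cr d (cr u w) + cr u (cr w d) + cr w (cr d u) = 0"
proof -
  have "C d \<times> (C u \<times> C w) + C u \<times> (C w \<times> C d) + C w \<times> (C d \<times> C u) = 0"
    unfolding cross3_def by (simp add: vec_eq_iff forall_3 vector_3 algebra_simps)
  then show ?thesis by (simp add: C_inj[symmetric] C_cr C_add)
qed

lemma dot_cr_skew: "dot (cr d u) w = - dot u (cr d w)"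
proof -
  have "inner (C d \<times> C u) (C w) = - inner (C u) (C d \<times> C w)"
    unfolding cross3_def by (simp add: inner_vec_def sum_3 vector_3 algebra_simps)
  then show ?thesis by (simp add: dot_C C_cr)
qed

lemma antisym_cr:
  assumes L: "linear L" and as: "\<And>u w. dot (L u) w = - dot u (L w)"
  shows "\<exists>d. \<forall>v. L v = cr d v"
proof -
  define L' where "L' x = C (L (rcomb e0 x))" for x
  have lin: "linear L'" unfolding L'_def
    using linear_compose[OF linear_compose[OF rcomb_lin L] C_lin] by (simp add: o_def)
  have "inner (L' x) y = - inner x (L' y)" for x y
    using as[of "rcomb e0 x" "rcomb e0 y"] by (simp add: L'_def dot_C)
  then obtain d' where d': "\<And>x. L' x = d' \<times> x" using antisym_cross3[OF lin] by blast
  have "L v = cr (rcomb e0 d') v" for v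
  proof -
    have "C (L v) = L' (C v)" by (simp add: L'_def)
    then show ?thesis by (simp add: C_inj[symmetric] C_cr d')
  qed
  then show ?thesis by blast
qed

lemma cr_cancel: assumes h: "\<And>v. cr a v = cr b v" shows "a = b"
proof -
  have "C a \<times> x = C b \<times> x" for x
    using arg_cong[OF h[of "rcomb e0 x"], of C] by (simp add: C_cr)
  then have "C a = C b" by (rule cross3_cancel)
  then show ?thesis by (simp add: C_inj)
qed

lemma cr_basis_levi:
  assumes e: "e \<in> posONB_V eps sp OR prj"
  shows "(\<Sum>j\<in>UNIV. \<Sum>k\<in>UNIV. (levi i j k * rcoord e d $ k) *\<^sub>R e j) = cr d (e i)"
proof -
  have rb: "rbasis e" using e posONB_iff by auto
  have "cr d (e i) = rcomb e (rcoord e d \<times> axis i 1)"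
    using key_cross[OF e, of d "e i"] cr_eq rcoord_basis[OF rb] by simp
  also have "\<dots> = (\<Sum>j\<in>UNIV. (\<Sum>k\<in>UNIV. levi i j k * rcoord e d $ k) *\<^sub>R e j)"
    by (simp add: rcomb_def cross_axis_levi)
  finally show ?thesis by (simp add: scaleR_sum_left)
qed

end


lemma rcomb_linear_img: "linear g \<Longrightarrow> rcomb (g \<circ> e) d = g (rcomb e d)"
  by (simp add: rcomb_def linear_sum linear_scale)

lemma indep3:
  fixes g :: "3 \<Rightarrow> 'a::real_vector"
  assumes z: "\<And>d. rcomb g d = 0 \<Longrightarrow> d = 0"
  shows "inj g" "independent (range g)" "card (range g) = 3"
proof -
  show ig: "inj g"
  proof (rule injI)
    fix i j assume "g i = g j"
    then have "rcomb g (axis i 1 - axis j 1) = 0" by (simp add: rcomb_diff)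
    then have "axis i (1::real) = axis j 1" using z by fastforce
    then show "i = j" by (simp add: axis_eq_axis)
  qed
  then show "card (range g) = 3" by (simp add: card_image)
  show "independent (range g)"
  proof
    assume "dependent (range g)"
    then obtain u where u: "\<exists>v\<in>range g. u v \<noteq> 0" "(\<Sum>v\<in>range g. u v *\<^sub>R v) = 0"
      using dependent_finite[of "range g"] by auto
    have "(\<Sum>v\<in>range g. u v *\<^sub>R v) = (\<Sum>i\<in>UNIV. u (g i) *\<^sub>R g i)"
      using sum.reindex[OF ig, of "\<lambda>v. u v *\<^sub>R v"] by simp
    also have "\<dots> = rcomb g (\<chi> i. u (g i))" by (simp add: rcomb_def)
    finally have "(\<chi> i. u (g i)) = 0" using u(2) z by simp
    then show False using u(1) by (auto simp: vec_eq_iff)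
  qed
qed

lemma span3: "rbasis e \<Longrightarrow> span (range e) = UNIV"
proof -
  assume e: "rbasis e"
  have "v \<in> span (range e)" for v
  proof -
    have "v = (\<Sum>i\<in>UNIV. rcoord e v $ i *\<^sub>R e i)" using rcomb_rcoord[OF e, of v] by (simp add: rcomb_def)
    also have "\<dots> \<in> span (range e)" by (intro span_sum span_scale span_base) auto
    finally show ?thesis .
  qed
  then show ?thesis by auto
qed

context dm begin

abbreviation "E \<equiv> Espace eps sp"
abbreviation "lft \<equiv> lift prj"

lemma e0_indep: "rcomb e0 d = 0 \<Longrightarrow> d = 0" using rcomb_eq0[OF e0(1)] .
lemma e0_ind: "independent (range e0)" and e0_card: "card (range e0) = 3"
  using indep3[of e0, OF e0_indep] by auto

lemma dim_V: "dim (UNIV :: 'v set) = 3"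
  using dim_unique[of "range e0" UNIV 3] span3[OF e0(1)] e0_ind e0_card by auto

lemma dim_range_inj:
  fixes g :: "'v \<Rightarrow> 'm"
  assumes g: "linear g" and inj: "\<And>v. g v = 0 \<Longrightarrow> v = 0"
  shows "dim (range g) = 3"
proof -
  have z: "rcomb (g \<circ> e0) d = 0 \<Longrightarrow> d = 0" for d
    using rcomb_linear_img[OF g] inj e0_indep by metis
  have sub: "range (g \<circ> e0) \<subseteq> range g" by auto
  have spn: "range g \<subseteq> span (range (g \<circ> e0))"
  proof
    fix x assume "x \<in> range g"
    then obtain v where "x = g v" by auto
    then have "x = rcomb (g \<circ> e0) (C v)" using rcomb_linear_img[OF g] by simp
    also have "\<dots> \<in> span (range (g \<circ> e0))" unfolding rcomb_def by (intro span_sum span_scale span_base) auto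
    finally show "x \<in> span (range (g \<circ> e0))" .
  qed
  have i3: "independent (range (g \<circ> e0))" "card (range (g \<circ> e0)) = 3"
    using indep3[of "g \<circ> e0", OF z] by auto
  show ?thesis using dim_unique[OF sub spn i3] .
qed

lemma E_surj:
  assumes P: "P \<in> E"
  shows "\<exists>x\<in>P. prj x = v"
proof -
  have sP: "subspace P" and dP: "dim P = 3" and tr: "P \<inter> range eps = {0}"
    using P by (auto simp: Espace_def)
  obtain B where B: "B \<subseteq> P" "independent B" "P \<subseteq> span B" "card B = 3"
    using basis_exists[of P] dP by metis
  have fB: "finite B" using B(4) card.infinite by fastforce
  have kerP: "x \<in> P \<Longrightarrow> prj x = 0 \<Longrightarrow> x = 0" for x using tr pi_ker by blast
  have injB: "inj_on prj B"
  proof (rule inj_onI)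
    fix x y assume "x \<in> B" "y \<in> B" "prj x = prj y"
    then have "x \<in> P" "y \<in> P" "prj (x - y) = 0" using B(1) by (auto simp: prj_diff)
    then have "x - y \<in> P" "prj (x - y) = 0" using subspace_diff[OF sP] by auto
    then show "x = y" using kerP by fastforce
  qed
  have spB: "span B \<subseteq> P" using span_minimal[OF B(1) sP] .
  have indB: "independent (prj ` B)"
  proof
    assume "dependent (prj ` B)"
    then obtain u where u: "\<exists>v\<in>prj ` B. u v \<noteq> 0" "(\<Sum>v\<in>prj ` B. u v *\<^sub>R v) = 0"
      using dependent_finite[of "prj ` B"] fB by auto
    have "(\<Sum>v\<in>prj ` B. u v *\<^sub>R v) = (\<Sum>b\<in>B. u (prj b) *\<^sub>R prj b)"
      using sum.reindex[OF injB, of "\<lambda>v. u v *\<^sub>R v"] by simp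
    also have "\<dots> = prj (\<Sum>b\<in>B. u (prj b) *\<^sub>R b)" by (simp add: prj_sum prj_scale)
    finally have pz: "prj (\<Sum>b\<in>B. u (prj b) *\<^sub>R b) = 0" using u(2) by simp
    have mP: "(\<Sum>b\<in>B. u (prj b) *\<^sub>R b) \<in> P"
      by (intro subsetD[OF spB] span_sum span_scale span_base) auto
    have z: "(\<Sum>b\<in>B. u (prj b) *\<^sub>R b) = 0" using kerP[OF mP pz] .
    have nd: "\<not> (\<exists>w. (\<exists>v\<in>B. w v \<noteq> 0) \<and> (\<Sum>v\<in>B. w v *\<^sub>R v) = 0)"
      using B(2) iffD2[OF dependent_finite[OF fB]] by blast
    have "\<forall>b\<in>B. u (prj b) = 0"
    proof (rule ccontr)
      assume "\<not> (\<forall>b\<in>B. u (prj b) = 0)"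
      then have "(\<exists>v\<in>B. u (prj v) \<noteq> 0) \<and> (\<Sum>v\<in>B. u (prj v) *\<^sub>R v) = 0" using z by simp
      moreover have "\<not> ((\<exists>v\<in>B. (\<lambda>b. u (prj b)) v \<noteq> 0) \<and> (\<Sum>v\<in>B. (\<lambda>b. u (prj b)) v *\<^sub>R v) = 0)"
        using nd by (rule not_ex[THEN iffD1, THEN spec])
      ultimately show False by simp
    qed
    then show False using u(1) by auto
  qed
  have cB: "card (prj ` B) = 3" using card_image[OF injB] B(4) by simp
  have "v \<in> span (prj ` B)"
  proof (rule ccontr)
    assume nv: "v \<notin> span (prj ` B)"
    then have "independent (insert v (prj ` B))" using independent_insertI indB by blast
    moreover have "insert v (prj ` B) \<subseteq> span (range e0)" using span3[OF e0(1)] by simp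
    ultimately have "card (insert v (prj ` B)) \<le> card (range e0)"
      using independent_span_bound[of "range e0"] by auto
    moreover have "card (insert v (prj ` B)) = 4"
    proof -
      have "v \<notin> prj ` B" using nv span_base[of v "prj ` B"] by blast
      then show ?thesis using cB fB by (simp add: card_insert_disjoint)
    qed
    ultimately show False using e0_card by simp
  qed
  then have "v \<in> prj ` span B" using linear_span_image[OF pi_lin] by auto
  then show ?thesis using spB by auto
qed

lemma E_unique:
  assumes P: "P \<in> E" and x: "x \<in> P" "y \<in> P" "prj x = prj y"
  shows "x = y"
proof -
  have sP: "subspace P" and tr: "P \<inter> range eps = {0}" using P by (auto simp: Espace_def)
  have "x - y \<in> P" using x(1,2) by (rule subspace_diff[OF sP])
  moreover have "prj (x - y) = 0" using x(3) by (simp add: prj_diff)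
  then have "x - y \<in> range eps" using pi_ker by blast
  ultimately have "x - y \<in> P \<inter> range eps" by blast
  then have "x - y = 0" using tr by blast
  then show ?thesis by simp
qed

lemma lift_ex1: "P \<in> E \<Longrightarrow> \<exists>!x. x \<in> P \<and> prj x = v"
  using E_surj E_unique by blast

lemma lift_in: "P \<in> E \<Longrightarrow> lft P v \<in> P" and lift_prj[simp]: "P \<in> E \<Longrightarrow> prj (lft P v) = v"
  using theI'[OF lift_ex1, of P v] unfolding lift_def by auto

lemma lift_eqI: "P \<in> E \<Longrightarrow> x \<in> P \<Longrightarrow> prj x = v \<Longrightarrow> lft P v = x"
  using E_unique lift_in lift_prj by metis

lemma lift_lin: assumes P: "P \<in> E" shows "linear (lft P)"
proof -
  have sP: "subspace P" using P by (auto simp: Espace_def)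
  show ?thesis
  proof (rule linearI)
    fix u w
    show "lft P (u + w) = lft P u + lft P w"
      by (rule lift_eqI[OF P]) (auto simp: prj_add lift_in[OF P] lift_prj[OF P] subspace_add[OF sP])
  next
    fix c u
    show "lft P (c *\<^sub>R u) = c *\<^sub>R lft P u"
      by (rule lift_eqI[OF P]) (auto simp: prj_scale lift_in[OF P] lift_prj[OF P] subspace_scale[OF sP])
  qed
qed

lemma sp_lift: assumes P: "P \<in> E" shows "sp (lft P u) (lft P w) = (dot u w, 0)"
proof -
  have "snd (sp (lft P u) (lft P w)) = 0" using P lift_in[OF P] by (auto simp: Espace_def)
  moreover have "fst (sp (lft P u) (lft P w)) = dot u w" using dot_prj[of "lft P u" "lft P w"] P by simp
  ultimately show ?thesis by (metis prod.collapse)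
qed

lemma eps_lift[simp]: "P \<in> E \<Longrightarrow> eps (lft P v) = eV v"
  using eV_prj[of "lft P v"] by simp

lemma E_intro:
  fixes g :: "'v \<Rightarrow> 'm"
  assumes g: "linear g" and pg: "\<And>v. prj (g v) = v" and du: "\<And>u w. snd (sp (g u) (g w)) = 0"
  shows "range g \<in> E" "\<And>v. lft (range g) v = g v"
proof -
  have inj: "g v = 0 \<Longrightarrow> v = 0" for v using pg[of v] by simp
  have tr: "range g \<inter> range eps = {0}"
  proof -
    have "x \<in> range g \<Longrightarrow> x \<in> range eps \<Longrightarrow> x = 0" for x
    proof -
      assume "x \<in> range g" "x \<in> range eps"
      obtain v where xv: "x = g v" using \<open>x \<in> range g\<close> by blast
      obtain y where "x = eps y" using \<open>x \<in> range eps\<close> by blast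
      then have "v = 0" using pg[of v] xv by simp
      then show "x = 0" using \<open>x = g v\<close> linear_0[OF g] by simp
    qed
    moreover have "0 \<in> range g" using linear_0[OF g] by (metis rangeI)
    moreover have "0 \<in> range eps" by (metis eps_zero rangeI)
    ultimately show ?thesis by auto
  qed
  show rg: "range g \<in> E"
    unfolding Espace_def
    using linear_subspace_image[OF g subspace_UNIV] dim_range_inj[OF g inj] tr du by auto
  show "lft (range g) v = g v" for v by (rule lift_eqI[OF rg]) (auto simp: pg)
qed

definition s0 :: "'v \<Rightarrow> 'm" where "s0 v = (\<Sum>i\<in>UNIV. C v $ i *\<^sub>R ch (e0 i))"

lemma s0_lin: "linear s0"
  unfolding s0_def
  by (rule linearI) (simp_all add: C_add C_scale scaleR_add_left sum.distrib scaleR_sum_right)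

lemma prj_s0: "prj (s0 v) = v"
proof -
  have "prj (s0 v) = rcomb e0 (C v)" by (simp add: s0_def prj_sum prj_scale rcomb_def)
  then show ?thesis by simp
qed

definition hh :: "'v \<Rightarrow> 'v \<Rightarrow> real" where "hh u w = snd (sp (s0 u) (s0 w))"

lemma hh_lin2: "linear (hh u)"
  unfolding hh_def
  by (rule linearI) (simp_all add: linear_add[OF s0_lin] linear_scale[OF s0_lin] sp_add2 sp_scale2)

lemma hh_lin1: "linear (\<lambda>u. hh u w)"
  unfolding hh_def
  by (rule linearI) (simp_all add: linear_add[OF s0_lin] linear_scale[OF s0_lin] sp_add1 sp_scale1)

lemma hh_sym: "hh u w = hh w u" by (simp add: hh_def sp_sym)

definition KK :: "'v \<Rightarrow> 'v" where "KK u = rcomb e0 (\<chi> j. - hh u (e0 j) / 2)"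

lemma KK_lin: "linear KK"
proof -
  have "linear (\<lambda>u. (\<chi> j. - hh u (e0 j) / 2))"
    by (rule linearI) (simp_all add: vec_eq_iff linear_add[OF hh_lin1] linear_scale[OF hh_lin1] field_simps)
  from linear_compose[OF this rcomb_lin] show ?thesis unfolding KK_def by (simp add: o_def)
qed

lemma C_dot: "C w $ j = dot w (e0 j)" using rcoord_onb[OF e0(2,1)] C_def by simp

lemma dot_KK: "dot (KK u) w = - hh u w / 2"
proof -
  have "dot (KK u) w = (\<Sum>j\<in>UNIV. - hh u (e0 j) / 2 * dot (e0 j) w)" by (simp add: KK_def dot_rcomb1)
  also have "\<dots> = - (\<Sum>j\<in>UNIV. C w $ j * hh u (e0 j)) / 2"
    by (simp add: C_dot dot_sym sum_negf sum_divide_distrib mult.commute)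
  also have "(\<Sum>j\<in>UNIV. C w $ j * hh u (e0 j)) = hh u w"
  proof -
    have "hh u w = hh u (rcomb e0 (C w))" by simp
    also have "\<dots> = rcomb (hh u \<circ> e0) (C w)" by (rule rcomb_linear_img[OF hh_lin2, symmetric])
    finally show ?thesis by (simp add: rcomb_def)
  qed
  finally show ?thesis .
qed

definition l0 :: "'v \<Rightarrow> 'm" where "l0 v = s0 v + eV (KK v)"

lemma l0_lin: "linear l0"
  unfolding l0_def using linear_compose_add[OF s0_lin linear_compose[OF KK_lin eV_lin, unfolded o_def]] .

lemma prj_l0: "prj (l0 v) = v" by (simp add: l0_def prj_add prj_s0)

lemma du_l0: "snd (sp (l0 u) (l0 w)) = 0"
proof -
  have "snd (sp (l0 u) (l0 w)) = hh u w + dot u (KK w) + dot (KK u) w"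
    by (simp add: l0_def sp_add1 sp_add2 sp_eV1 sp_eV2 prj_s0 prj_add hh_def)
  also have "\<dots> = 0" using dot_KK[of u w] dot_KK[of w u] dot_sym[of u "KK w"] hh_sym[of u w] by simp
  finally show ?thesis .
qed

definition P0 :: "'m set" where "P0 = range l0"

lemma P0: "P0 \<in> E" using E_intro[OF l0_lin prj_l0 du_l0] P0_def by simp

lemma E_ne: "E \<noteq> {}" using P0 by auto

end

context dm begin

abbreviation "es \<equiv> esub eps sp OR prj"

definition sig :: "'m set \<Rightarrow> 'm \<Rightarrow> 'v" where
  "sig P x = (THE v. x = lft P (prj x) + eV v)"

lemma sig_ex1: assumes P: "P \<in> E" shows "\<exists>!v. x = lft P (prj x) + eV v"
proof -
  have "prj (x - lft P (prj x)) = 0" using P by (simp add: prj_diff)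
  then obtain v where v: "x - lft P (prj x) = eV v" using ker_prj_eV by blast
  show ?thesis
  proof (rule ex1I[of _ v])
    show "x = lft P (prj x) + eV v" using v by (simp add: algebra_simps)
    fix w assume "x = lft P (prj x) + eV w"
    then have "eV w = eV v" using v by (metis add_diff_cancel_left')
    then show "w = v" using eV_inj by blast
  qed
qed

lemma sig_decomp: "P \<in> E \<Longrightarrow> x = lft P (prj x) + eV (sig P x)"
  unfolding sig_def by (rule theI'[OF sig_ex1])

lemma sig_eqI: assumes P: "P \<in> E" and a: "a \<in> P" and x: "x = a + eV v" shows "sig P x = v"
proof -
  have "prj x = prj a" using x by (simp add: prj_add)
  then have "lft P (prj x) = a" using lift_eqI[OF P a] by simp
  then have "x = lft P (prj x) + eV v" using x by simp
  then show ?thesis unfolding sig_def using sig_ex1[OF P] by (rule the1_equality[rotated])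
qed

lemma sig_lin: assumes P: "P \<in> E" shows "linear (sig P)"
proof (rule linearI)
  fix x y
  show "sig P (x + y) = sig P x + sig P y"
  proof (rule sig_eqI[OF P])
    show "lft P (prj x) + lft P (prj y) \<in> P"
      using P lift_in[OF P] by (auto simp: Espace_def intro: subspace_add)
    show "x + y = lft P (prj x) + lft P (prj y) + eV (sig P x + sig P y)"
      using sig_decomp[OF P, of x] sig_decomp[OF P, of y] by (simp add: eV_add algebra_simps)
  qed
next
  fix c x
  show "sig P (c *\<^sub>R x) = c *\<^sub>R sig P x"
  proof (rule sig_eqI[OF P])
    show "c *\<^sub>R lft P (prj x) \<in> P"
      using P lift_in[OF P] by (auto simp: Espace_def intro: subspace_scale)
    show "c *\<^sub>R x = c *\<^sub>R lft P (prj x) + eV (c *\<^sub>R sig P x)"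
      using sig_decomp[OF P, of x] by (metis eV_scale scaleR_add_right)
  qed
qed

lemma sig_lift[simp]: "P \<in> E \<Longrightarrow> sig P (lft P v) = 0"
  using sig_eqI[of P "lft P v" "lft P v" 0] lift_in by simp

lemma sig_eV[simp]: assumes "P \<in> E" shows "sig P (eV v) = v"
proof -
  have "0 \<in> P" using assms by (auto simp: Espace_def subspace_def)
  then show ?thesis using sig_eqI[OF assms, of 0 "eV v" v] by simp
qed

lemma range_lift: assumes P: "P \<in> E" shows "range (lft P) = P"
proof
  show "range (lft P) \<subseteq> P" using lift_in[OF P] by auto
  show "P \<subseteq> range (lft P)"
  proof
    fix x assume "x \<in> P"
    then have "x = lft P (prj x)" using lift_eqI[OF P] by simp
    then show "x \<in> range (lft P)" by (metis rangeI)
  qed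
qed

lemma lift_diff_ex:
  assumes A: "A \<in> E" and B: "B \<in> E"
  shows "\<exists>d. \<forall>v. lft B v = lft A v + eV (cr d v)"
proof -
  define L where "L v = sig A (lft B v)" for v
  have dec: "lft B v = lft A v + eV (L v)" for v
    using sig_decomp[OF A, of "lft B v"] B L_def by simp
  have lin: "linear L"
    unfolding L_def using linear_compose[OF lift_lin[OF B] sig_lin[OF A]] by (simp add: o_def)
  have "dot (L u) w = - dot u (L w)" for u w
  proof -
    have "snd (sp (lft B u) (lft B w)) = 0" using sp_lift[OF B] by simp
    also have "snd (sp (lft B u) (lft B w)) = dot u (L w) + dot (L u) w"
      unfolding dec[of u] dec[of w]
      by (simp add: sp_add1 sp_add2 sp_lift[OF A] sp_eV1 sp_eV2 prj_add A)
    finally show ?thesis by simp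
  qed
  then obtain d where "\<And>v. L v = cr d v" using antisym_cr[OF lin] by blast
  then show ?thesis using dec by metis
qed

lemma cr_rcomb: "cr d (rcomb e c) = rcomb (cr d \<circ> e) c"
  using rcomb_linear_img[OF cr_lin2] by simp

lemma esub_char:
  assumes A: "A \<in> E" and B: "B \<in> E" and d: "\<And>v. lft B v = lft A v + eV (cr d v)"
  shows "es B A = d"
proof -
  have key: "e \<in> posONB_V eps sp OR prj \<Longrightarrow> w = rcomb e d' \<Longrightarrow>
      (\<forall>i. lft B (e i) = lft A (e i)
        + (\<Sum>j\<in>UNIV. \<Sum>k\<in>UNIV. (levi i j k * d' $ k) *\<^sub>R eps (lft A (e j))))
      \<longleftrightarrow> (\<forall>i. lft B (e i) = lft A (e i) + eV (cr w (e i)))" for e w d'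
  proof -
    assume e: "e \<in> posONB_V eps sp OR prj" and w: "w = rcomb e d'"
    have rb: "rbasis e" using e posONB_iff by auto
    have "(\<Sum>j\<in>UNIV. \<Sum>k\<in>UNIV. (levi i j k * d' $ k) *\<^sub>R eps (lft A (e j)))
        = eV (\<Sum>j\<in>UNIV. \<Sum>k\<in>UNIV. (levi i j k * d' $ k) *\<^sub>R e j)" for i
      by (simp add: A eV_sum eV_scale)
    also have "\<dots>i = eV (cr w (e i))" for i
      using cr_basis_levi[OF e, of i w] w rcoord_rcomb[OF rb] by simp
    finally show ?thesis by simp
  qed
  show ?thesis
    unfolding esub_def
  proof (rule the_equality)
    show "\<forall>e\<in>posONB_V eps sp OR prj. \<exists>d'. d = rcomb e d' \<and>
      (\<forall>i. lft B (e i) = lft A (e i)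
        + (\<Sum>j\<in>UNIV. \<Sum>k\<in>UNIV. (levi i j k * d' $ k) *\<^sub>R eps (lft A (e j))))"
    proof
      fix e assume e: "e \<in> posONB_V eps sp OR prj"
      have rb: "rbasis e" using e posONB_iff by auto
      have dd: "d = rcomb e (rcoord e d)" using rcomb_rcoord[OF rb] by simp
      show "\<exists>d'. d = rcomb e d' \<and>
      (\<forall>i. lft B (e i) = lft A (e i)
        + (\<Sum>j\<in>UNIV. \<Sum>k\<in>UNIV. (levi i j k * d' $ k) *\<^sub>R eps (lft A (e j))))"
        using key[OF e dd] dd d by blast
    qed
  next
    fix w assume h: "\<forall>e\<in>posONB_V eps sp OR prj. \<exists>d'. w = rcomb e d' \<and>
      (\<forall>i. lft B (e i) = lft A (e i)
        + (\<Sum>j\<in>UNIV. \<Sum>k\<in>UNIV. (levi i j k * d' $ k) *\<^sub>R eps (lft A (e j))))"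
    then obtain d' where w: "w = rcomb e0 d'" and hi: "\<forall>i. lft B (e0 i) = lft A (e0 i)
        + (\<Sum>j\<in>UNIV. \<Sum>k\<in>UNIV. (levi i j k * d' $ k) *\<^sub>R eps (lft A (e0 j)))"
      using e0_pos by blast
    have "\<forall>i. lft B (e0 i) = lft A (e0 i) + eV (cr w (e0 i))" using key[OF e0_pos w] hi by blast
    then have "cr w (e0 i) = cr d (e0 i)" for i using d[of "e0 i"] eV_inj by simp
    then have "cr w \<circ> e0 = cr d \<circ> e0" by auto
    then have "cr w v = cr d v" for v using cr_rcomb[of w e0 "C v"] cr_rcomb[of d e0 "C v"] by simp
    then show "w = d" by (rule cr_cancel)
  qed
qed

lemma esub_prop:
  assumes A: "A \<in> E" and B: "B \<in> E"
  shows "\<forall>v. lft B v = lft A v + eV (cr (es B A) v)"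
proof -
  obtain d where d: "\<forall>v. lft B v = lft A v + eV (cr d v)" using lift_diff_ex[OF A B] by blast
  then have "es B A = d" using esub_char[OF A B] by blast
  then show ?thesis using d by simp
qed

lemma esub_frame:
  assumes A: "A \<in> E" and B: "B \<in> E" and e: "e \<in> posONB_V eps sp OR prj"
  shows "\<exists>d. es B A = rcomb e d \<and>
             (\<forall>i. lft B (e i) = lft A (e i)
                + (\<Sum>j\<in>UNIV. \<Sum>k\<in>UNIV. (levi i j k * d $ k) *\<^sub>R eps (lft A (e j))))"
proof -
  have rb: "rbasis e" using e posONB_iff by auto
  define d where "d = rcoord e (es B A)"
  have w: "es B A = rcomb e d" using rcomb_rcoord[OF rb] d_def by simp
  have "(\<Sum>j\<in>UNIV. \<Sum>k\<in>UNIV. (levi i j k * d $ k) *\<^sub>R eps (lft A (e j)))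
        = eV (cr (es B A) (e i))" for i
  proof -
    have "(\<Sum>j\<in>UNIV. \<Sum>k\<in>UNIV. (levi i j k * d $ k) *\<^sub>R eps (lft A (e j)))
        = eV (\<Sum>j\<in>UNIV. \<Sum>k\<in>UNIV. (levi i j k * d $ k) *\<^sub>R e j)"
      by (simp add: A eV_sum eV_scale)
    also have "\<dots> = eV (cr (es B A) (e i))"
      using cr_basis_levi[OF e, of i "es B A"] d_def by simp
    finally show ?thesis .
  qed
  then have "\<forall>i. lft B (e i) = lft A (e i)
                + (\<Sum>j\<in>UNIV. \<Sum>k\<in>UNIV. (levi i j k * d $ k) *\<^sub>R eps (lft A (e j)))"
    using esub_prop[OF A B] by simp
  then show ?thesis using w by blast
qed

lemma esub_bij: assumes A: "A \<in> E" shows "bij_betw (\<lambda>B. es B A) E UNIV"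
  unfolding bij_betw_def
proof
  show "inj_on (\<lambda>B. es B A) E"
  proof (rule inj_onI)
    fix B B' assume B: "B \<in> E" and B': "B' \<in> E" and eq: "es B A = es B' A"
    have "lft B v = lft B' v" for v
    proof -
      have "lft B v = lft A v + eV (cr (es B A) v)" using esub_prop[OF A B] by blast
      also have "\<dots> = lft B' v" using esub_prop[OF A B'] eq by metis
      finally show ?thesis .
    qed
    then have "lft B = lft B'" by (rule ext)
    then show "B = B'" using range_lift[OF B] range_lift[OF B'] by metis
  qed
  show "(\<lambda>B. es B A) ` E = UNIV"
  proof -
    have "d \<in> (\<lambda>B. es B A) ` E" for d
    proof -
      define g where "g v = lft A v + eV (cr d v)" for v
      have gl: "linear g" unfolding g_def
        using linear_compose_add[OF lift_lin[OF A] linear_compose[OF cr_lin2 eV_lin, unfolded o_def]] .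
      have gp: "prj (g v) = v" for v by (simp add: g_def prj_add A)
      have gd: "snd (sp (g u) (g w)) = 0" for u w
      proof -
        have "snd (sp (g u) (g w)) = dot u (cr d w) + dot (cr d u) w"
          by (simp add: g_def sp_add1 sp_add2 sp_lift[OF A] sp_eV1 sp_eV2 prj_add A)
        then show ?thesis using dot_cr_skew by simp
      qed
      have R: "range g \<in> E" and lg: "\<And>v. lft (range g) v = g v" using E_intro[OF gl gp gd] by auto
      have "es (range g) A = d" by (rule esub_char[OF A R]) (simp only: lg g_def)
      then show ?thesis using R by (rule image_eqI[OF sym])
    qed
    then show ?thesis by auto
  qed
qed

lemma esub_chasles:
  assumes A: "A \<in> E" and B: "B \<in> E" and C: "C' \<in> E"
  shows "es C' B + es B A = es C' A"
proof -
  have "lft C' v = lft A v + eV (cr (es C' B + es B A) v)" for v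
  proof -
    have 1: "lft C' v = lft B v + eV (cr (es C' B) v)" using esub_prop[OF B C] by (rule spec)
    have 2: "lft B v = lft A v + eV (cr (es B A) v)" using esub_prop[OF A B] by (rule spec)
    show ?thesis unfolding 1 2 by (simp add: cr_add1 eV_add algebra_simps)
  qed
  then have "es C' A = es C' B + es B A" by (rule esub_char[OF A C])
  then show ?thesis by simp
qed

end

context dm begin

abbreviation "bet \<equiv> beta eps sp OR prj"
abbreviation "SC \<equiv> screws eps sp OR prj"
abbreviation "res \<equiv> resultant eps sp OR prj"

lemma beta_ex1: assumes A: "A \<in> E" shows "\<exists>!v. \<exists>a\<in>A. z = a + eV v"
proof (rule ex1I[of _ "sig A z"])
  show "\<exists>a\<in>A. z = a + eV (sig A z)" using sig_decomp[OF A, of z] lift_in[OF A] by blast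
  fix v assume "\<exists>a\<in>A. z = a + eV v"
  then obtain a where "a \<in> A" "z = a + eV v" by blast
  then show "v = sig A z" using sig_eqI[OF A] by metis
qed

lemma beta_in: "A \<in> E \<Longrightarrow> bet z A = sig A z"
  unfolding beta_def using beta_ex1
  by (simp add: the1_equality[OF beta_ex1] sig_decomp lift_in bexI[of _ "lft A (prj z)"])

lemma beta_out: "A \<notin> E \<Longrightarrow> bet z A = 0"
  unfolding beta_def by simp

lemma beta_screw:
  assumes P: "P \<in> E" and Q: "Q \<in> E"
  shows "bet z Q - bet z P = cr (prj z) (es Q P)"
proof -
  define u where "u = prj z"
  have 1: "z = lft P u + eV (sig P z)" using sig_decomp[OF P] u_def by simp
  have 2: "z = lft Q u + eV (sig Q z)" using sig_decomp[OF Q] u_def by simp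
  have 3: "lft Q u = lft P u + eV (cr (es Q P) u)" using esub_prop[OF P Q] by (rule spec)
  have "lft P u + eV (sig P z) = lft Q u + eV (sig Q z)" by (rule trans[OF 1[symmetric] 2])
  also have "\<dots> = lft P u + eV (cr (es Q P) u + sig Q z)" unfolding 3 by (simp add: eV_add algebra_simps)
  finally have "eV (sig P z) = eV (cr (es Q P) u + sig Q z)" by simp
  then have "sig P z = cr (es Q P) u + sig Q z" using eV_inj by blast
  then have "sig Q z - sig P z = cr u (es Q P)" using cr_anti[of u "es Q P"] by simp
  then show ?thesis using beta_in P Q u_def by simp
qed

lemma beta_screws: "bet z \<in> SC"
  unfolding screws_def using beta_out beta_screw by blast

lemma res_unique:
  assumes r: "\<forall>P\<in>E. \<forall>Q\<in>E. s Q - s P = cr r (es Q P)"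
    and r': "\<forall>P\<in>E. \<forall>Q\<in>E. s Q - s P = cr r' (es Q P)"
  shows "r = r'"
proof -
  have "cr r d = cr r' d" for d
  proof -
    have "d \<in> (\<lambda>B. es B P0) ` E" using esub_bij[OF P0] by (simp add: bij_betw_def)
    then obtain Q where Q: "Q \<in> E" and d: "d = es Q P0" by (rule imageE)
    have "s Q - s P0 = cr r (es Q P0)" using r[rule_format, OF P0 Q] .
    moreover have "s Q - s P0 = cr r' (es Q P0)" using r'[rule_format, OF P0 Q] .
    ultimately show ?thesis using d by simp
  qed
  then show ?thesis by (rule cr_cancel)
qed

lemma res_eq:
  assumes h: "\<forall>P\<in>E. \<forall>Q\<in>E. s Q - s P = cr r (es Q P)"
  shows "res s = r"
  unfolding resultant_def
proof (rule the_equality)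
  show "\<forall>P\<in>E. \<forall>Q\<in>E. s Q - s P = cr r (es Q P)" by (rule h)
  fix r' assume h': "\<forall>P\<in>E. \<forall>Q\<in>E. s Q - s P = cr r' (es Q P)"
  show "r' = r" by (rule res_unique[OF h' h])
qed

lemma res_beta: "res (bet z) = prj z"
  by (rule res_eq) (simp add: beta_screw)

lemma res_screw: assumes "s \<in> SC" shows "\<forall>P\<in>E. \<forall>Q\<in>E. s Q - s P = cr (res s) (es Q P)"
proof -
  obtain r where r: "\<forall>P\<in>E. \<forall>Q\<in>E. s Q - s P = cr r (es Q P)" using assms unfolding screws_def by blast
  then have "res s = r" by (rule res_eq)
  then show ?thesis using r by simp
qed

lemma beta_add: "bet (x + y) A = bet x A + bet y A"
  by (cases "A \<in> E") (simp_all add: beta_in beta_out linear_add[OF sig_lin])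

lemma beta_scale: "bet (c *\<^sub>R x) A = c *\<^sub>R bet x A"
  by (cases "A \<in> E") (simp_all add: beta_in beta_out linear_scale[OF sig_lin])

lemma beta_eps: "bet (eps x) = epsS eps sp OR prj (bet x)"
proof
  fix A show "bet (eps x) A = epsS eps sp OR prj (bet x) A"
  proof (cases "A \<in> E")
    case True
    have "bet (eps x) A = sig A (eps x)" using beta_in[OF True] by simp
    also have "\<dots> = prj x" using sig_eV[OF True, of "prj x"] by simp
    finally show ?thesis using True by (simp add: epsS_def res_beta)
  next
    case False then show ?thesis by (simp add: epsS_def beta_out)
  qed
qed

lemma beta_inj: "inj bet"
proof (rule injI)
  fix x y assume eq: "bet x = bet y"
  have "prj x = prj y" using res_beta[of x] res_beta[of y] eq by simp
  moreover have "sig P0 x = sig P0 y" using eq beta_in[OF P0] by metis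
  ultimately show "x = y" using sig_decomp[OF P0, of x] sig_decomp[OF P0, of y] by metis
qed

lemma beta_surj: assumes s: "s \<in> SC" shows "\<exists>z. bet z = s"
proof -
  define r where "r = res s"
  have sc: "\<forall>P\<in>E. \<forall>Q\<in>E. s Q - s P = cr r (es Q P)" using res_screw[OF s] r_def by simp
  have out: "\<forall>A. A \<notin> E \<longrightarrow> s A = 0" using s unfolding screws_def by blast
  define z where "z = lft P0 r + eV (s P0)"
  have pz: "prj z = r" using P0 by (simp add: z_def prj_add)
  have zP0: "bet z P0 = s P0"
    using beta_in[OF P0] sig_eqI[OF P0 lift_in[OF P0] z_def] by simp
  have "bet z A = s A" for A
  proof (cases "A \<in> E")
    case True
    have "bet z A - bet z P0 = cr r (es A P0)" using beta_screw[OF P0 True] pz by simp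
    moreover have "s A - s P0 = cr r (es A P0)" using sc P0 True by blast
    ultimately show ?thesis using zP0 by (metis diff_add_cancel)
  next
    case False then show ?thesis using out beta_out by simp
  qed
  then show ?thesis by blast
qed

lemma beta_bij: "bij_betw bet UNIV SC"
  unfolding bij_betw_def
  using beta_inj beta_screws beta_surj by blast

definition Ps :: "'m set" where "Ps = (SOME P. P \<in> E)"
lemma Ps: "Ps \<in> E" unfolding Ps_def using E_ne by (metis ex_in_conv someI_ex)

lemma spS_beta: "spS eps sp OR prj (bet x) (bet y) = sp x y"
proof -
  have L: "spS eps sp OR prj (bet x) (bet y)
    = (dot (prj x) (prj y), dot (prj x) (sig Ps y) + dot (sig Ps x) (prj y))"
    unfolding spS_def Let_def Ps_def[symmetric] using beta_in[OF Ps] res_beta by simp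
  have x: "x = lft Ps (prj x) + eV (sig Ps x)" and y: "y = lft Ps (prj y) + eV (sig Ps y)"
    using sig_decomp[OF Ps] by auto
  have "sp x y = sp (lft Ps (prj x) + eV (sig Ps x)) (lft Ps (prj y) + eV (sig Ps y))"
    using x y by simp
  also have "\<dots> = (dot (prj x) (prj y), dot (prj x) (sig Ps y) + dot (sig Ps x) (prj y))"
    by (simp add: sp_add1 sp_add2 sp_lift[OF Ps] sp_eV1 sp_eV2 Ps prj_add)
  finally show ?thesis using L by simp
qed

end

context dm begin

abbreviation "scb \<equiv> scomb eps sp OR prj"

lemma beta_lin: "linear (\<lambda>x. bet x A)"
  by (rule linearI) (simp_all add: beta_add beta_scale)

lemma beta_sum: "bet (\<Sum>i\<in>S. f i) A = (\<Sum>i\<in>S. bet (f i) A)"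
  using linear_sum[OF beta_lin] .

lemma scomb_beta: "scb (bet \<circ> b) ac = bet (mcomb eps b ac)"
proof
  fix A
  show "scb (bet \<circ> b) ac A = bet (mcomb eps b ac) A"
    by (simp add: scomb_def mcomb_def beta_sum beta_add beta_scale beta_eps)
qed

lemma dbasis_beta:
  assumes b: "dbasis_on (mcomb eps) UNIV b"
  shows "dbasis_on scb SC (bet \<circ> b)"
    and "\<And>x. dcoord scb (bet \<circ> b) (bet x) = dcoord (mcomb eps) b x"
proof -
  have u: "bet x = scb (bet \<circ> b) ac \<longleftrightarrow> x = mcomb eps b ac" for x ac
    using beta_inj scomb_beta by (metis injD)
  show "dbasis_on scb SC (bet \<circ> b)"
    unfolding dbasis_on_def
  proof (intro conjI ballI allI)
    fix i show "(bet \<circ> b) i \<in> SC" using beta_screws by simp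
  next
    fix s assume "s \<in> SC"
    then obtain x where x: "s = bet x" using beta_surj by metis
    show "\<exists>!ac. s = scb (bet \<circ> b) ac"
      unfolding x u using b unfolding dbasis_on_def by simp
  qed
  show "dcoord scb (bet \<circ> b) (bet x) = dcoord (mcomb eps) b x" for x
    unfolding dcoord_def u by simp
qed

lemma reMat_beta:
  assumes b: "dbasis_on (mcomb eps) UNIV b'"
  shows "reMat scb (bet \<circ> b) (bet \<circ> b') = reMat (mcomb eps) b b'"
  unfolding reMat_def using dbasis_beta(2)[OF b] by (simp add: o_def)

lemma mcomb_lift:
  assumes P: "P \<in> E"
  shows "mcomb eps (lft P \<circ> e) (a, c) = lft P (rcomb e a) + eV (rcomb e c)"
  by (simp add: mcomb_def rcomb_def linear_sum[OF lift_lin[OF P]] linear_scale[OF lift_lin[OF P]]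
      eV_sum eV_scale P sum.distrib)

lemma dbasis_lift:
  assumes P: "P \<in> E" and e: "rbasis e"
  shows "dbasis_on (mcomb eps) UNIV (lft P \<circ> e)"
    and "\<And>x. dcoord (mcomb eps) (lft P \<circ> e) x = (rcoord e (prj x), rcoord e (sig P x))"
proof -
  have ex: "x = mcomb eps (lft P \<circ> e) (rcoord e (prj x), rcoord e (sig P x))" for x
    using sig_decomp[OF P, of x] by (simp add: mcomb_lift[OF P] rcomb_rcoord[OF e])
  have un: "x = mcomb eps (lft P \<circ> e) ac \<Longrightarrow> ac = (rcoord e (prj x), rcoord e (sig P x))" for x ac
  proof -
    assume x: "x = mcomb eps (lft P \<circ> e) ac"
    obtain a c where ac: "ac = (a, c)" by fastforce
    have x': "x = lft P (rcomb e a) + eV (rcomb e c)" using x ac mcomb_lift[OF P] by simp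
    have "prj x = rcomb e a" using x' P by (simp add: prj_add)
    moreover have "sig P x = rcomb e c" using sig_eqI[OF P lift_in[OF P] x'] .
    ultimately show ?thesis using ac rcoord_rcomb[OF e] by simp
  qed
  show "dbasis_on (mcomb eps) UNIV (lft P \<circ> e)"
    unfolding dbasis_on_def using ex un by blast
  show "dcoord (mcomb eps) (lft P \<circ> e) x = (rcoord e (prj x), rcoord e (sig P x))" for x
    unfolding dcoord_def using ex un by blast
qed

lemma ellS_beta:
  assumes P: "P \<in> E"
  shows "ellS eps sp OR prj P e = bet \<circ> (lft P \<circ> e)"
proof (rule ext, rule ext)
  fix i Q
  show "ellS eps sp OR prj P e i Q = (bet \<circ> (lft P \<circ> e)) i Q"
  proof (cases "Q \<in> E")
    case True
    have "bet (lft P (e i)) Q - bet (lft P (e i)) P = cr (e i) (es Q P)"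
      using beta_screw[OF P True] P by simp
    moreover have "bet (lft P (e i)) P = 0" using beta_in[OF P] P by simp
    ultimately show ?thesis using True by (simp add: ellS_def)
  next
    case False then show ?thesis by (simp add: ellS_def beta_out)
  qed
qed

lemma orientation:
  assumes P: "P \<in> E" and e: "e \<in> posONB_V eps sp OR prj"
  shows "dbasis_on scb SC (ellS eps sp OR prj P e)
           \<and> (\<forall>b. dbasis_on (mcomb eps) UNIV b \<longrightarrow>
                 (b \<in> OR \<longleftrightarrow> det (reMat scb (bet \<circ> b) (ellS eps sp OR prj P e)) > 0))"
proof -
  have rb: "rbasis e" and de: "det (rMat e f0) > 0" using e posONB_iff by auto
  have db: "dbasis_on (mcomb eps) UNIV (lft P \<circ> e)" using dbasis_lift(1)[OF P rb] .
  have pe: "prj \<circ> (lft P \<circ> e) = e" using P by (simp add: o_def)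
  have "b \<in> OR \<longleftrightarrow> det (reMat scb (bet \<circ> b) (ellS eps sp OR prj P e)) > 0"
    if b: "dbasis_on (mcomb eps) UNIV b" for b
  proof -
    have "reMat scb (bet \<circ> b) (ellS eps sp OR prj P e) = rMat (prj \<circ> b) e"
      using ellS_beta[OF P] reMat_beta[OF db] reMat_rMat[OF db] pe by simp
    moreover have "rMat (prj \<circ> b) f0 = rMat (prj \<circ> b) e ** rMat e f0" using rMat_mult[OF rb f0] .
    then have "det (rMat (prj \<circ> b) f0) = det (rMat (prj \<circ> b) e) * det (rMat e f0)" by (simp add: det_mul)
    ultimately show ?thesis using OR_iff b de by (simp add: zero_less_mult_iff)
  qed
  moreover have "dbasis_on scb SC (ellS eps sp OR prj P e)"
    using dbasis_beta(1)[OF db] ellS_beta[OF P] by simp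
  ultimately show ?thesis by blast
qed

end

context dm begin

abbreviation "pM \<equiv> posONB_M eps sp OR"

lemma snd_sum': "snd (sum f S) = (\<Sum>x\<in>S. snd (f x))"
  by (induct S rule: infinite_finite_induct) auto

lemma lift_posM:
  assumes P: "P \<in> E" and e: "e \<in> posONB_V eps sp OR prj"
  shows "lft P \<circ> e \<in> pM"
proof -
  have rb: "rbasis e" and de: "det (rMat e f0) > 0" and on: "orthon e" using e posONB_iff by auto
  have db: "dbasis_on (mcomb eps) UNIV (lft P \<circ> e)" using dbasis_lift(1)[OF P rb] .
  have pe: "prj \<circ> (lft P \<circ> e) = e" using P by (simp add: o_def)
  have "lft P \<circ> e \<in> OR" using OR_iff db pe de by simp
  moreover have "sp (lft P (e i)) (lft P (e j)) = (if i = j then 1 else 0, 0)" for i j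
    using sp_lift[OF P] on unfolding orthon_def by simp
  ultimately show ?thesis unfolding posONB_M_def by simp
qed

lemma posM_char:
  assumes m: "m \<in> pM"
  shows "\<exists>P\<in>E. \<exists>e\<in>posONB_V eps sp OR prj. m = lft P \<circ> e"
proof -
  have mO: "m \<in> OR" and ms: "\<And>i j. sp (m i) (m j) = (if i = j then 1 else 0, 0)"
    using m unfolding posONB_M_def by auto
  have db: "dbasis_on (mcomb eps) UNIV m" and dp: "det (rMat (prj \<circ> m) f0) > 0" using mO OR_iff by auto
  define e where "e = prj \<circ> m"
  have rb: "rbasis e" using dbasis_prj[OF db] e_def by simp
  have on: "orthon e" unfolding orthon_def e_def using ms dot_prj by simp
  have eP: "e \<in> posONB_V eps sp OR prj" using posONB_iff rb on dp e_def by simp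
  define g where "g u = rcomb m (rcoord e u)" for u
  have gl: "linear g" unfolding g_def
    using linear_compose[OF rcoord_lin[OF rb] rcomb_lin] by (simp add: o_def)
  have gp: "prj (g u) = u" for u
    using rcomb_linear_img[OF pi_lin, of m "rcoord e u"] rcomb_rcoord[OF rb] e_def g_def by simp
  have gd: "snd (sp (g u) (g w)) = 0" for u w
  proof -
    have ms2: "snd (sp (m i) (m j)) = 0" for i j using ms[of i j] by simp
    show ?thesis by (simp add: g_def rcomb_def sp_sum1 sp_sum2 sp_scale1 sp_scale2 ms2 snd_sum')
  qed
  have R: "range g \<in> E" and lg: "\<And>v. lft (range g) v = g v" using E_intro[OF gl gp gd] by auto
  have "lft (range g) \<circ> e = m"
  proof
    fix i show "(lft (range g) \<circ> e) i = m i" using lg rcoord_basis[OF rb] by (simp add: g_def)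
  qed
  then show ?thesis using R eP by metis
qed

definition WW :: "'m set \<Rightarrow> 'm \<Rightarrow> 'm \<Rightarrow> 'm" where
  "WW P x y = lft P (cr (prj x) (prj y)) + eV (cr (prj x) (sig P y) + cr (sig P x) (prj y))"

lemma crossM_formula:
  assumes P: "P \<in> E" and e: "e \<in> posONB_V eps sp OR prj"
  shows "(\<Sum>i\<in>UNIV. \<Sum>j\<in>UNIV. \<Sum>k\<in>UNIV.
             dscale eps (dmul (dcomp eps (lft P \<circ> e) x i) (dcomp eps (lft P \<circ> e) y j)) (levi i j k *\<^sub>R (lft P \<circ> e) k))
         = WW P x y"
proof -
  have rb: "rbasis e" using e posONB_iff by auto
  define a where "a = rcoord e (prj x)"
  define c where "c = rcoord e (sig P x)"
  define a' where "a' = rcoord e (prj y)"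
  define c' where "c' = rcoord e (sig P y)"
  have dx: "dcomp eps (lft P \<circ> e) x i = (a $ i, c $ i)" for i
    unfolding dcomp_def dbasis_lift(2)[OF P rb] a_def c_def by simp
  have dy: "dcomp eps (lft P \<circ> e) y j = (a' $ j, c' $ j)" for j
    unfolding dcomp_def dbasis_lift(2)[OF P rb] a'_def c'_def by simp
  define F where "F p q = (\<Sum>i\<in>UNIV. \<Sum>j\<in>UNIV. \<Sum>k\<in>UNIV. (levi i j k * p$i * q$j) *\<^sub>R e k)" for p q
  have Fc: "F (rcoord e u) (rcoord e w) = cr u w" for u w
    using cr_formula[OF e, of u w] F_def by simp
  have tm: "dscale eps (dmul (a $ i, c $ i) (a' $ j, c' $ j)) (levi i j k *\<^sub>R lft P (e k))
      = lft P ((levi i j k * a$i * a'$j) *\<^sub>R e k)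
        + eV ((levi i j k * a$i * c'$j) *\<^sub>R e k + (levi i j k * c$i * a'$j) *\<^sub>R e k)" for i j k
    by (simp add: dscale_def dmul_def linear_scale[OF lift_lin[OF P]] eps_scale P eV_scale eV_add
        algebra_simps)
  have "(\<Sum>i\<in>UNIV. \<Sum>j\<in>UNIV. \<Sum>k\<in>UNIV.
             dscale eps (dmul (dcomp eps (lft P \<circ> e) x i) (dcomp eps (lft P \<circ> e) y j)) (levi i j k *\<^sub>R (lft P \<circ> e) k))
      = (\<Sum>i\<in>UNIV. \<Sum>j\<in>UNIV. \<Sum>k\<in>UNIV. lft P ((levi i j k * a$i * a'$j) *\<^sub>R e k)
        + eV ((levi i j k * a$i * c'$j) *\<^sub>R e k + (levi i j k * c$i * a'$j) *\<^sub>R e k))"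
    by (simp add: dx dy tm)
  also have "\<dots> = lft P (F a a') + eV (F a c' + F c a')"
    by (simp add: F_def sum.distrib linear_sum[OF lift_lin[OF P]] eV_sum eV_add)
  also have "\<dots> = WW P x y" by (simp add: WW_def Fc a_def a'_def c_def c'_def)
  finally show ?thesis .
qed

lemma sig_change:
  assumes P: "P \<in> E" and Q: "Q \<in> E"
  shows "sig Q x = sig P x + cr (prj x) (es Q P)"
  using beta_screw[OF P Q, of x] beta_in[OF P] beta_in[OF Q] by (simp add: algebra_simps)

lemma WW_indep:
  assumes P: "P \<in> E" and Q: "Q \<in> E"
  shows "WW Q x y = WW P x y"
proof -
  define d where "d = es Q P"
  define u where "u = prj x"
  define w where "w = prj y"
  have l: "lft Q v = lft P v + eV (cr d v)" for v using esub_prop[OF P Q] d_def by simp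
  have sx: "sig Q x = sig P x + cr u d" using sig_change[OF P Q] u_def d_def by simp
  have sy: "sig Q y = sig P y + cr w d" using sig_change[OF P Q] w_def d_def by simp
  have j: "cr d (cr u w) + cr u (cr w d) + cr (cr u d) w = 0"
    using cr_jacobi[of d u w] cr_anti[of "cr u d" w] cr_anti[of u d] by (simp add: linear_neg[OF cr_lin2])
  have "WW Q x y = WW P x y + eV (cr d (cr u w) + cr u (cr w d) + cr (cr u d) w)"
    unfolding WW_def l sx sy u_def[symmetric] w_def[symmetric]
    by (simp add: cr_add1 cr_add2 eV_add algebra_simps)
  then show ?thesis using j by simp
qed

lemma crossM_eq:
  assumes P: "P \<in> E"
  shows "crossM eps sp OR x y = WW P x y"
  unfolding crossM_def
proof (rule the_equality)
  show "\<forall>m\<in>pM. WW P x y = (\<Sum>i\<in>UNIV. \<Sum>j\<in>UNIV. \<Sum>k\<in>UNIV.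
             dscale eps (dmul (dcomp eps m x i) (dcomp eps m y j)) (levi i j k *\<^sub>R m k))"
  proof
    fix m assume "m \<in> pM"
    then obtain Q e where Q: "Q \<in> E" and e: "e \<in> posONB_V eps sp OR prj" and m: "m = lft Q \<circ> e"
      using posM_char by blast
    show "WW P x y = (\<Sum>i\<in>UNIV. \<Sum>j\<in>UNIV. \<Sum>k\<in>UNIV.
             dscale eps (dmul (dcomp eps m x i) (dcomp eps m y j)) (levi i j k *\<^sub>R m k))"
      unfolding m crossM_formula[OF Q e] using WW_indep[OF P Q] by simp
  qed
next
  fix w assume h: "\<forall>m\<in>pM. w = (\<Sum>i\<in>UNIV. \<Sum>j\<in>UNIV. \<Sum>k\<in>UNIV.
             dscale eps (dmul (dcomp eps m x i) (dcomp eps m y j)) (levi i j k *\<^sub>R m k))"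
  have "w = (\<Sum>i\<in>UNIV. \<Sum>j\<in>UNIV. \<Sum>k\<in>UNIV.
             dscale eps (dmul (dcomp eps (lft P \<circ> e0) x i) (dcomp eps (lft P \<circ> e0) y j)) (levi i j k *\<^sub>R (lft P \<circ> e0) k))"
    using h lift_posM[OF P e0_pos] by (rule bspec)
  then show "w = WW P x y" unfolding crossM_formula[OF P e0_pos] .
qed

lemma beta_cross: "bet (crossM eps sp OR x y) = commS eps sp OR prj (bet x) (bet y)"
proof
  fix A
  show "bet (crossM eps sp OR x y) A = commS eps sp OR prj (bet x) (bet y) A"
  proof (cases "A \<in> E")
    case True
    have "bet (crossM eps sp OR x y) A = sig A (WW A x y)" using crossM_eq[OF True] beta_in[OF True] by simp
    also have "\<dots> = cr (prj x) (sig A y) + cr (sig A x) (prj y)"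
      by (rule sig_eqI[OF True lift_in[OF True]]) (simp add: WW_def)
    finally show ?thesis using True by (simp add: commS_def res_beta beta_in)
  next
    case False then show ?thesis by (simp add: commS_def beta_out)
  qed
qed

end

theorem theorem3:
  fixes eps :: "'m::real_vector \<Rightarrow> 'm"
    and sp :: "'m \<Rightarrow> 'm \<Rightarrow> real \<times> real"
    and OR :: "(3 \<Rightarrow> 'm) set"
    and prj :: "'m \<Rightarrow> 'v::real_vector"
  assumes eps_lin: "linear eps"
    and eps_sq: "\<And>x. eps (eps x) = 0"
    and free3: "\<exists>b. dbasis_on (mcomb eps) UNIV b"
    and sp_lin: "\<And>y. linear (\<lambda>x. sp x y)"
    and sp_sym: "\<And>x y. sp x y = sp y x"
    and sp_eps: "\<And>x y. sp x (eps y) = (0, fst (sp x y))"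
    and sp_pos: "\<And>x. fst (sp x x) \<ge> 0"
    and sp_def: "\<And>x. fst (sp x x) = 0 \<longleftrightarrow> x \<in> range eps"
    and OR_or: "is_dorientation (mcomb eps) UNIV OR"
    and pi_lin: "linear prj"
    and pi_surj: "surj prj"
    and pi_ker: "\<And>x. prj x = 0 \<longleftrightarrow> x \<in> range eps"
  shows
    \<comment> \<open>(V, dot, or) is an oriented 3-dimensional Euclidean vector space\<close>
    "(\<forall>u. linear (\<lambda>v. dotV eps sp OR prj u v))
     \<and> (\<forall>u v. dotV eps sp OR prj u v = dotV eps sp OR prj v u)
     \<and> (\<forall>v. v \<noteq> 0 \<longrightarrow> dotV eps sp OR prj v v > 0)
     \<and> dim (UNIV :: 'v set) = 3
     \<and> is_rorientation (orV eps sp OR prj)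
     \<comment> \<open>E with the subtraction B - A is a Euclidean affine space modelled on V\<close>
     \<and> Espace eps sp \<noteq> {}
     \<and> (\<forall>A\<in>Espace eps sp. \<forall>B\<in>Espace eps sp. \<forall>e\<in>posONB_V eps sp OR prj.
           \<exists>d. esub eps sp OR prj B A = rcomb e d \<and>
             (\<forall>i. lift prj B (e i) = lift prj A (e i)
                + (\<Sum>j\<in>UNIV. \<Sum>k\<in>UNIV. (levi i j k * d $ k) *\<^sub>R eps (lift prj A (e j)))))
     \<and> (\<forall>A\<in>Espace eps sp. bij_betw (\<lambda>B. esub eps sp OR prj B A) (Espace eps sp) UNIV)
     \<and> (\<forall>A\<in>Espace eps sp. \<forall>B\<in>Espace eps sp. \<forall>C\<in>Espace eps sp.
           esub eps sp OR prj C B + esub eps sp OR prj B A = esub eps sp OR prj C A)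
     \<comment> \<open>beta is well defined\<close>
     \<and> (\<forall>z. \<forall>A\<in>Espace eps sp. \<exists>!v. \<exists>a\<in>A. z = a + epsV eps prj v)
     \<and> (\<forall>z. beta eps sp OR prj z \<in> screws eps sp OR prj)
     \<comment> \<open>beta is D-linear\<close>
     \<and> (\<forall>x y A. beta eps sp OR prj (x + y) A = beta eps sp OR prj x A + beta eps sp OR prj y A)
     \<and> (\<forall>c x A. beta eps sp OR prj (c *\<^sub>R x) A = c *\<^sub>R beta eps sp OR prj x A)
     \<and> (\<forall>x. beta eps sp OR prj (eps x) = epsS eps sp OR prj (beta eps sp OR prj x))
     \<comment> \<open>beta is bijective onto the screws\<close>
     \<and> bij_betw (beta eps sp OR prj) UNIV (screws eps sp OR prj)
     \<comment> \<open>beta preserves the scalar product\<close>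
     \<and> (\<forall>x y. spS eps sp OR prj (beta eps sp OR prj x) (beta eps sp OR prj y) = sp x y)
     \<comment> \<open>beta preserves the orientation\<close>
     \<and> (\<forall>P\<in>Espace eps sp. \<forall>e\<in>posONB_V eps sp OR prj.
           dbasis_on (scomb eps sp OR prj) (screws eps sp OR prj) (ellS eps sp OR prj P e)
           \<and> (\<forall>b. dbasis_on (mcomb eps) UNIV b \<longrightarrow>
                 (b \<in> OR \<longleftrightarrow>
                  det (reMat (scomb eps sp OR prj) (beta eps sp OR prj \<circ> b) (ellS eps sp OR prj P e)) > 0)))
     \<comment> \<open>and hence the cross product\<close>
     \<and> (\<forall>x y. beta eps sp OR prj (crossM eps sp OR x y)
               = commS eps sp OR prj (beta eps sp OR prj x) (beta eps sp OR prj y))"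
proof -
  interpret dm eps sp OR prj
    by (rule dm.intro) (fact assms)+
  show ?thesis
    apply (intro conjI)
    subgoal using dot_lin2 by blast
    subgoal using dot_sym by blast
    subgoal using dot_pos by blast
    subgoal by (rule dim_V)
    subgoal by (rule is_rorientation_orV)
    subgoal by (rule E_ne)
    subgoal using esub_frame by blast
    subgoal using esub_bij by blast
    subgoal using esub_chasles by blast
    subgoal using beta_ex1 by blast
    subgoal using beta_screws by blast
    subgoal using beta_add by blast
    subgoal using beta_scale by blast
    subgoal using beta_eps by blast
    subgoal by (rule beta_bij)
    subgoal using spS_beta by blast
    subgoal using orientation by blast
    subgoal using beta_cross by blast
    done
qed

end
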